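(* Let $(\Gamma,f,\mu)$ be a measured Reeb graph, $\mathfrak{c}$ a balanced circulation function on $\Gamma$, and $\tilde V$ the set of exceptional points. Assume that for each exceptional point $x_i\in\tilde V$ there are a neighborhood $U_i$ of $x_i$ and a $1$-form $\beta_i$ on $U_i$ such that for each $x\in U_i\setminus\{x_i\}$, $\operatorname{sign}(\beta_i/df)(x)=-\operatorname{sign}\mathfrak{c}(x)$. Then there exists a $1$-form $\beta$ on $\Gamma$ which does not vanish on $\Gamma\setminus\tilde V$, coincides with $\beta_i$ in a neighborhood of each $x_i\in\tilde V$, and is such that the form $f\beta$ is exact.
   Context: Reeb graph: a finite connected oriented graph $\Gamma$ with continuous $f\colon\Gamma\to\mathbb{R}$ strictly increasing along edges; vertices are $1$-valent (of boundary or non-boundary type) or $3$-valent with two incoming and one outgoing edge or vice versa; at a $3$-valent vertex the trunk $e_0$ is the edge alone in its direction, the other two $e_1,e_2$ are branches. A log-smooth measure $\mu$: smooth non-vanishing density $d\mu/df$ at interior points and $1$-valent vertices; near each $3$-valent $v$, with $\tilde f=f-f(v)$, $\mu([v,x])=\varepsilon_i\psi(\tilde f(x))\ln|\tilde f(x)|+\eta_i(\tilde f(x))$ for $x\in e_i$ near $v$, where $\varepsilon_0=2,\varepsilon_1=\varepsilon_2=-1$ and $\psi,\eta_i$ are smooth near $0$ with $\psi(0)=0,\psi'(0)\neq0$, $\eta_0+\eta_1+\eta_2=0$. A measured Reeb graph is a Reeb graph with a log-smooth measure. With $V(\Gamma)$ the vertex set, a circulation function is a continuous $\mathfrak{c}\colon\Gamma\setminus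 V(\Gamma)\to\mathbb{R}$ with finite limits at vertices along each edge, such that $\mathfrak{c}(y)-\mathfrak{c}(x)=\int_{[x,y]}f\,d\mu$ for interior points $x,y$ of an edge pointing from $x$ to $y$, and at every non-boundary vertex the sum of limits along incoming edges equals the sum of limits along outgoing edges. It is balanced if at each $3$-valent vertex $v$ its limits $c_0(v),c_1(v),c_2(v)$ along the three adjacent edges are non-zero and of the same sign. The set of exceptional points is $\tilde V=V(\Gamma)\cup\{x\in\Gamma: f(x)=0\}\cup\{x\in\Gamma:\mathfrak{c}(x)=0\}$. A $1$-form on $\Gamma$ is an expression which locally can be written $g(f)\,df$ with $g$ a smooth function of $f$; $\beta/df$ denotes the corresponding function $g$. A $1$-form $\beta$ is exact if $\int_\ell\beta=0$ for every cycle $\ell$ in $\Gamma$. *)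

theory Defs
  imports "HOL-Analysis.Analysis"
begin

text \<open>
  Since f is continuous and strictly increasing along each edge, every edge e is
  parametrised by the value of f itself: its points are identified with the
  interval [fv (src e), fv (tgt e)], the endpoints being the vertices.
  A point of the graph is either a vertex or an interior point (e, t) of an edge.
\<close>

datatype ('v, 'e) gpt = Vert 'v | EPt 'e real

definition smooth_near :: "(real \<Rightarrow> real) \<Rightarrow> real \<Rightarrow> bool" where
  "smooth_near g x \<longleftrightarrow>
     (\<exists>\<epsilon>>0. \<forall>n. \<forall>s\<in>ball x \<epsilon>. ((deriv ^^ n) g) differentiable (at s))"

definition indeg :: "'e set \<Rightarrow> ('e \<Rightarrow> 'v) \<Rightarrow> 'v \<Rightarrow> nat" where
  "indeg E tgt v = card {e\<in>E. tgt e = v}"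

definition outdeg :: "'e set \<Rightarrow> ('e \<Rightarrow> 'v) \<Rightarrow> 'v \<Rightarrow> nat" where
  "outdeg E src v = card {e\<in>E. src e = v}"

definition valence :: "'e set \<Rightarrow> ('e \<Rightarrow> 'v) \<Rightarrow> ('e \<Rightarrow> 'v) \<Rightarrow> 'v \<Rightarrow> nat" where
  "valence E src tgt v = indeg E tgt v + outdeg E src v"

definition incident :: "('e \<Rightarrow> 'v) \<Rightarrow> ('e \<Rightarrow> 'v) \<Rightarrow> 'v \<Rightarrow> 'e \<Rightarrow> bool" where
  "incident src tgt v e \<longleftrightarrow> src e = v \<or> tgt e = v"

definition reeb_graph :: "'v set \<Rightarrow> 'e set \<Rightarrow> ('e \<Rightarrow> 'v) \<Rightarrow> ('e \<Rightarrow> 'v) \<Rightarrow> ('v \<Rightarrow> real)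
    \<Rightarrow> 'v set \<Rightarrow> bool" where
  "reeb_graph V E src tgt fv B \<longleftrightarrow>
     finite V \<and> finite E \<and> V \<noteq> {} \<and>
     (\<forall>e\<in>E. src e \<in> V \<and> tgt e \<in> V \<and> fv (src e) < fv (tgt e)) \<and>
     (\<forall>v\<in>V. (indeg E tgt v, outdeg E src v) \<in> {(1,0), (0,1), (2,1), (1,2)}) \<and>
     B \<subseteq> {v\<in>V. valence E src tgt v = 1} \<and>
     (\<forall>u\<in>V. \<forall>w\<in>V.
        (\<lambda>a b. \<exists>e\<in>E. (src e = a \<and> tgt e = b) \<or> (src e = b \<and> tgt e = a))\<^sup>*\<^sup>* u w)"

definition is_trunk :: "'e set \<Rightarrow> ('e \<Rightarrow> 'v) \<Rightarrow> ('e \<Rightarrow> 'v) \<Rightarrow> 'v \<Rightarrow> 'e \<Rightarrow> bool" where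
  "is_trunk E src tgt v e \<longleftrightarrow>
     (tgt e = v \<and> indeg E tgt v = 1) \<or> (src e = v \<and> outdeg E src v = 1)"

definition eps_coef :: "'e set \<Rightarrow> ('e \<Rightarrow> 'v) \<Rightarrow> ('e \<Rightarrow> 'v) \<Rightarrow> 'v \<Rightarrow> 'e \<Rightarrow> real" where
  "eps_coef E src tgt v e = (if is_trunk E src tgt v e then 2 else -1)"

text \<open>The segment [v, x] for x = (e,t) on an edge e adjacent to v, in f-coordinates.\<close>
definition vseg :: "('e \<Rightarrow> 'v) \<Rightarrow> ('v \<Rightarrow> real) \<Rightarrow> 'v \<Rightarrow> 'e \<Rightarrow> real \<Rightarrow> real set" where
  "vseg tgt fv v e t = (if tgt e = v then {t..fv v} else {fv v..t})"

text \<open>Log-smooth measure, given by its density dens e = d\<mu>/df on the interior of each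
  edge e (so \<mu>([x,y]) = integral of dens e over [f x, f y]).\<close>
definition log_smooth :: "'v set \<Rightarrow> 'e set \<Rightarrow> ('e \<Rightarrow> 'v) \<Rightarrow> ('e \<Rightarrow> 'v) \<Rightarrow> ('v \<Rightarrow> real)
    \<Rightarrow> ('e \<Rightarrow> real \<Rightarrow> real) \<Rightarrow> bool" where
  "log_smooth V E src tgt fv dens \<longleftrightarrow>
     (\<forall>e\<in>E. \<forall>t. fv (src e) < t \<and> t < fv (tgt e) \<longrightarrow>
        smooth_near (dens e) t \<and> dens e t > 0) \<and>
     (\<forall>v\<in>V. valence E src tgt v = 1 \<longrightarrow>
        (\<forall>e\<in>E. incident src tgt v e \<longrightarrow>
           (\<exists>h \<delta>. \<delta> > 0 \<and> smooth_near h (fv v) \<and> h (fv v) \<noteq> 0 \<and>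
              (\<forall>t. fv (src e) < t \<and> t < fv (tgt e) \<and> \<bar>t - fv v\<bar> < \<delta> \<longrightarrow> dens e t = h t)))) \<and>
     (\<forall>v\<in>V. valence E src tgt v = 3 \<longrightarrow>
        (\<exists>\<psi> \<eta> \<delta>. \<delta> > 0 \<and> smooth_near \<psi> 0 \<and> \<psi> 0 = 0 \<and> deriv \<psi> 0 \<noteq> 0 \<and>
           (\<forall>e\<in>E. incident src tgt v e \<longrightarrow> smooth_near (\<eta> e) 0) \<and>
           (\<forall>s. \<bar>s\<bar> < \<delta> \<longrightarrow> (\<Sum>e\<in>{e\<in>E. incident src tgt v e}. \<eta> e s) = 0) \<and>
           (\<forall>e\<in>E. incident src tgt v e \<longrightarrow>
              (\<forall>t. fv (src e) < t \<and> t < fv (tgt e) \<and> \<bar>t - fv v\<bar> < \<delta> \<longrightarrow>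
                 (dens e has_integral
                    (eps_coef E src tgt v e * \<psi> (t - fv v) * ln \<bar>t - fv v\<bar> + \<eta> e (t - fv v)))
                 (vseg tgt fv v e t)))))"

definition lim_src :: "('e \<Rightarrow> 'v) \<Rightarrow> ('v \<Rightarrow> real) \<Rightarrow> ('e \<Rightarrow> real \<Rightarrow> real) \<Rightarrow> 'e \<Rightarrow> real" where
  "lim_src src fv c e = Lim (at_right (fv (src e))) (c e)"

definition lim_tgt :: "('e \<Rightarrow> 'v) \<Rightarrow> ('v \<Rightarrow> real) \<Rightarrow> ('e \<Rightarrow> real \<Rightarrow> real) \<Rightarrow> 'e \<Rightarrow> real" where
  "lim_tgt tgt fv c e = Lim (at_left (fv (tgt e))) (c e)"

definition lim_at :: "('e \<Rightarrow> 'v) \<Rightarrow> ('e \<Rightarrow> 'v) \<Rightarrow> ('v \<Rightarrow> real) \<Rightarrow> ('e \<Rightarrow> real \<Rightarrow> real)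
    \<Rightarrow> 'v \<Rightarrow> 'e \<Rightarrow> real" where
  "lim_at src tgt fv c v e = (if tgt e = v then lim_tgt tgt fv c e else lim_src src fv c e)"

definition circulation :: "'v set \<Rightarrow> 'e set \<Rightarrow> ('e \<Rightarrow> 'v) \<Rightarrow> ('e \<Rightarrow> 'v) \<Rightarrow> ('v \<Rightarrow> real)
    \<Rightarrow> 'v set \<Rightarrow> ('e \<Rightarrow> real \<Rightarrow> real) \<Rightarrow> ('e \<Rightarrow> real \<Rightarrow> real) \<Rightarrow> bool" where
  "circulation V E src tgt fv B dens c \<longleftrightarrow>
     (\<forall>e\<in>E. continuous_on {fv (src e)<..<fv (tgt e)} (c e)) \<and>
     (\<forall>e\<in>E. \<forall>x y. fv (src e) < x \<and> x \<le> y \<and> y < fv (tgt e) \<longrightarrow>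
        c e y - c e x = integral {x..y} (\<lambda>t. t * dens e t)) \<and>
     (\<forall>e\<in>E. (\<exists>L. (c e \<longlongrightarrow> L) (at_right (fv (src e)))) \<and>
             (\<exists>L. (c e \<longlongrightarrow> L) (at_left (fv (tgt e))))) \<and>
     (\<forall>v\<in>V - B. (\<Sum>e\<in>{e\<in>E. tgt e = v}. lim_tgt tgt fv c e) =
                 (\<Sum>e\<in>{e\<in>E. src e = v}. lim_src src fv c e))"

definition balanced :: "'v set \<Rightarrow> 'e set \<Rightarrow> ('e \<Rightarrow> 'v) \<Rightarrow> ('e \<Rightarrow> 'v) \<Rightarrow> ('v \<Rightarrow> real)
    \<Rightarrow> ('e \<Rightarrow> real \<Rightarrow> real) \<Rightarrow> bool" where
  "balanced V E src tgt fv c \<longleftrightarrow>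
     (\<forall>v\<in>V. valence E src tgt v = 3 \<longrightarrow>
        (\<forall>e\<in>E. incident src tgt v e \<longrightarrow> lim_at src tgt fv c v e > 0) \<or>
        (\<forall>e\<in>E. incident src tgt v e \<longrightarrow> lim_at src tgt fv c v e < 0))"

definition exceptional :: "'v set \<Rightarrow> 'e set \<Rightarrow> ('e \<Rightarrow> 'v) \<Rightarrow> ('e \<Rightarrow> 'v) \<Rightarrow> ('v \<Rightarrow> real)
    \<Rightarrow> ('e \<Rightarrow> real \<Rightarrow> real) \<Rightarrow> ('v, 'e) gpt set" where
  "exceptional V E src tgt fv c =
     Vert ` V \<union> {EPt e t | e t. e \<in> E \<and> fv (src e) < t \<and> t < fv (tgt e) \<and> (t = 0 \<or> c e t = 0)}"

definition fval :: "('v \<Rightarrow> real) \<Rightarrow> ('v, 'e) gpt \<Rightarrow> real" where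
  "fval fv p = (case p of Vert v \<Rightarrow> fv v | EPt e t \<Rightarrow> t)"

text \<open>A local 1-form g(f) df on the star neighbourhood of radius r (in f) of the point p,
  with sign (g/df) = - sign c on the punctured neighbourhood.\<close>
definition local_form_ok :: "'e set \<Rightarrow> ('e \<Rightarrow> 'v) \<Rightarrow> ('e \<Rightarrow> 'v) \<Rightarrow> ('v \<Rightarrow> real)
    \<Rightarrow> ('e \<Rightarrow> real \<Rightarrow> real) \<Rightarrow> ('v, 'e) gpt \<Rightarrow> real \<Rightarrow> (real \<Rightarrow> real) \<Rightarrow> bool" where
  "local_form_ok E src tgt fv c p r g \<longleftrightarrow>
     r > 0 \<and> (\<forall>s. \<bar>s - fval fv p\<bar> < r \<longrightarrow> smooth_near g s) \<and>
     (case p of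
        Vert v \<Rightarrow> (\<forall>e\<in>E. incident src tgt v e \<longrightarrow>
           (\<forall>t. fv (src e) < t \<and> t < fv (tgt e) \<and> \<bar>t - fv v\<bar> < r \<longrightarrow>
              sgn (g t) = - sgn (c e t)))
      | EPt e0 t0 \<Rightarrow>
           (\<forall>t. fv (src e0) < t \<and> t < fv (tgt e0) \<and> \<bar>t - t0\<bar> < r \<and> t \<noteq> t0 \<longrightarrow>
              sgn (g t) = - sgn (c e0 t)))"

text \<open>A 1-form on the whole graph: ge e is the coefficient of df on edge e; it is
  locally g(f) df with g smooth, also at the vertices (one g for all adjacent edges).\<close>
definition one_form :: "'v set \<Rightarrow> 'e set \<Rightarrow> ('e \<Rightarrow> 'v) \<Rightarrow> ('e \<Rightarrow> 'v) \<Rightarrow> ('v \<Rightarrow> real)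
    \<Rightarrow> ('e \<Rightarrow> real \<Rightarrow> real) \<Rightarrow> bool" where
  "one_form V E src tgt fv ge \<longleftrightarrow>
     (\<forall>e\<in>E. \<forall>t. fv (src e) < t \<and> t < fv (tgt e) \<longrightarrow> smooth_near (ge e) t) \<and>
     (\<forall>v\<in>V. \<exists>h \<delta>. \<delta> > 0 \<and> smooth_near h (fv v) \<and>
        (\<forall>e\<in>E. incident src tgt v e \<longrightarrow>
           (\<forall>t. fv (src e) \<le> t \<and> t \<le> fv (tgt e) \<and> \<bar>t - fv v\<bar> < \<delta> \<longrightarrow> ge e t = h t)))"

definition coincides_near :: "'e set \<Rightarrow> ('e \<Rightarrow> 'v) \<Rightarrow> ('e \<Rightarrow> 'v) \<Rightarrow> ('v \<Rightarrow> real)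
    \<Rightarrow> ('e \<Rightarrow> real \<Rightarrow> real) \<Rightarrow> ('v, 'e) gpt \<Rightarrow> real \<Rightarrow> (real \<Rightarrow> real) \<Rightarrow> bool" where
  "coincides_near E src tgt fv ge p r g \<longleftrightarrow>
     (\<exists>\<delta>>0. \<delta> \<le> r \<and>
       (case p of
          Vert v \<Rightarrow> (\<forall>e\<in>E. incident src tgt v e \<longrightarrow>
             (\<forall>t. fv (src e) \<le> t \<and> t \<le> fv (tgt e) \<and> \<bar>t - fv v\<bar> < \<delta> \<longrightarrow> ge e t = g t))
        | EPt e0 t0 \<Rightarrow>
             (\<forall>t. fv (src e0) \<le> t \<and> t \<le> fv (tgt e0) \<and> \<bar>t - t0\<bar> < \<delta> \<longrightarrow> ge e0 t = g t)))"

text \<open>Cycles: closed walks in the underlying undirected graph; (e, True) traverses e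
  along its orientation, (e, False) against it.\<close>
definition wstart :: "('e \<Rightarrow> 'v) \<Rightarrow> ('e \<Rightarrow> 'v) \<Rightarrow> 'e \<times> bool \<Rightarrow> 'v" where
  "wstart src tgt s = (if snd s then src (fst s) else tgt (fst s))"

definition wend :: "('e \<Rightarrow> 'v) \<Rightarrow> ('e \<Rightarrow> 'v) \<Rightarrow> 'e \<times> bool \<Rightarrow> 'v" where
  "wend src tgt s = (if snd s then tgt (fst s) else src (fst s))"

definition closed_walk :: "'e set \<Rightarrow> ('e \<Rightarrow> 'v) \<Rightarrow> ('e \<Rightarrow> 'v) \<Rightarrow> ('e \<times> bool) list \<Rightarrow> bool" where
  "closed_walk E src tgt w \<longleftrightarrow>
     w \<noteq> [] \<and> fst ` set w \<subseteq> E \<and>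
     (\<forall>i. Suc i < length w \<longrightarrow> wend src tgt (w ! i) = wstart src tgt (w ! Suc i)) \<and>
     wend src tgt (last w) = wstart src tgt (hd w)"

definition cycle_integral :: "('e \<Rightarrow> 'v) \<Rightarrow> ('e \<Rightarrow> 'v) \<Rightarrow> ('v \<Rightarrow> real)
    \<Rightarrow> ('e \<Rightarrow> real \<Rightarrow> real) \<Rightarrow> ('e \<times> bool) list \<Rightarrow> real" where
  "cycle_integral src tgt fv h w =
     (\<Sum>s\<leftarrow>w. (if snd s then 1 else -1) *
          integral {fv (src (fst s))..fv (tgt (fst s))} (h (fst s)))"

definition exact_form :: "'e set \<Rightarrow> ('e \<Rightarrow> 'v) \<Rightarrow> ('e \<Rightarrow> 'v) \<Rightarrow> ('v \<Rightarrow> real)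
    \<Rightarrow> ('e \<Rightarrow> real \<Rightarrow> real) \<Rightarrow> bool" where
  "exact_form E src tgt fv h \<longleftrightarrow>
     (\<forall>w. closed_walk E src tgt w \<longrightarrow> cycle_integral src tgt fv h w = 0)"

end

theory Submission
  imports Defs "HOL-Computational_Algebra.Polynomial"
begin



definition Cn :: "nat \<Rightarrow> real set \<Rightarrow> (real \<Rightarrow> real) \<Rightarrow> bool" where
  "Cn n S f \<longleftrightarrow> (\<forall>k<n. \<forall>s\<in>S. (deriv ^^ k) f differentiable (at s))"

lemma Cn_0[simp]: "Cn 0 S f" by (simp add: Cn_def)

lemma Cn_Suc: "Cn (Suc n) S f \<longleftrightarrow> (\<forall>s\<in>S. f differentiable (at s)) \<and> Cn n S (deriv f)"
proof -
  have "\<And>k. (deriv ^^ Suc k) f = (deriv ^^ k) (deriv f)" by (simp add: funpow_Suc_right del: funpow.simps)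
  then show ?thesis unfolding Cn_def
    by (auto simp: less_Suc_eq_0_disj simp del: funpow.simps)
qed

lemma Cn_mono: "Cn (Suc n) S f \<Longrightarrow> Cn n S f" by (auto simp: Cn_def)
lemma Cn_mono_le: "Cn m S f \<Longrightarrow> n \<le> m \<Longrightarrow> Cn n S f" by (auto simp: Cn_def)
lemma Cn_subset: "Cn n S f \<Longrightarrow> T \<subseteq> S \<Longrightarrow> Cn n T f" by (auto simp: Cn_def)

lemma Cn_local: "open S \<Longrightarrow> (\<And>x. x\<in>S \<Longrightarrow> f x = g x) \<Longrightarrow> Cn n S f \<Longrightarrow> Cn n S g"
  unfolding Cn_def
proof (intro allI impI ballI)
  fix k s assume "open S" and eq: "\<And>x. x\<in>S \<Longrightarrow> f x = g x" and H: "\<forall>k<n. \<forall>s\<in>S. (deriv ^^ k) f differentiable at s"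
    and k: "k<n" and s: "s\<in>S"
  have ev: "\<forall>\<^sub>F y in nhds s. (deriv ^^ k) f y = (deriv ^^ k) g y"
  proof -
    have "\<forall>\<^sub>F y in nhds s. y \<in> S" using \<open>open S\<close> s by (simp add: eventually_nhds_in_open)
    then show ?thesis
    proof (rule eventually_mono)
      fix y assume "y\<in>S"
      have "\<forall>\<^sub>F z in nhds y. f z = g z" using \<open>open S\<close> \<open>y\<in>S\<close> eq
        by (metis (mono_tags, lifting) eventually_mono eventually_nhds_in_open)
      then show "(deriv ^^ k) f y = (deriv ^^ k) g y" by (rule higher_deriv_cong_ev) simp
    qed
  qed
  have "(deriv ^^ k) f differentiable at s" using H k s by auto
  then obtain D where "((deriv ^^ k) f has_derivative D) (at s)" by (auto simp: differentiable_def)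
  then have "((deriv ^^ k) g has_derivative D) (at s)"
  proof (rule has_derivative_transform_eventually[where s=UNIV, of "(deriv ^^ k) f" D s "(deriv ^^ k) g"])
    show "\<forall>\<^sub>F x' in at s. (deriv ^^ k) f x' = (deriv ^^ k) g x'"
      using ev by (simp add: eventually_at_filter eventually_mono)
    show "(deriv ^^ k) f s = (deriv ^^ k) g s" using eventually_nhds_x_imp_x[OF ev] .
  qed (use \<open>((deriv ^^ k) f has_derivative D) (at s)\<close> in auto)
  then show "(deriv ^^ k) g differentiable at s" by (auto simp: differentiable_def)
qed

lemma dD: "f differentiable (at s) \<Longrightarrow> (f has_real_derivative deriv f s) (at s)"
  using DERIV_deriv_iff_real_differentiable by blast

lemma Cn_const: "Cn n S (\<lambda>x. k)"
proof (induction n arbitrary: k)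
  case (Suc n)
  have "deriv (\<lambda>x. k) = (\<lambda>x. 0::real)" by (rule ext, rule DERIV_imp_deriv) auto
  then show ?case using Suc by (simp add: Cn_Suc)
qed simp

lemma Cn_ident: "Cn n S (\<lambda>x. x)"
proof (cases n)
  case (Suc m)
  have "deriv (\<lambda>x. x) = (\<lambda>x. 1::real)" by (rule ext, rule DERIV_imp_deriv) auto
  then show ?thesis using Suc by (simp add: Cn_Suc Cn_const)
qed simp

lemma Cn_add: "open S \<Longrightarrow> Cn n S f \<Longrightarrow> Cn n S g \<Longrightarrow> Cn n S (\<lambda>x. f x + g x)"
proof (induction n arbitrary: f g)
  case (Suc n)
  have df: "\<forall>s\<in>S. f differentiable at s" and dg: "\<forall>s\<in>S. g differentiable at s"
    and c1: "Cn n S (deriv f)" "Cn n S (deriv g)" using Suc.prems by (auto simp: Cn_Suc)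
  have eq: "deriv f x + deriv g x = deriv (\<lambda>x. f x + g x) x" if "x\<in>S" for x
    using df dg that by (intro DERIV_imp_deriv[symmetric] derivative_intros dD) auto
  have "Cn n S (\<lambda>x. deriv f x + deriv g x)" using Suc.IH Suc.prems(1) c1 by blast
  then have "Cn n S (deriv (\<lambda>x. f x + g x))" using Cn_local[OF Suc.prems(1), where f="\<lambda>x. deriv f x + deriv g x" and g="deriv (\<lambda>x. f x + g x)"] eq by blast
  moreover have "\<forall>s\<in>S. (\<lambda>x. f x + g x) differentiable at s" using df dg by auto
  ultimately show ?case by (simp add: Cn_Suc)
qed simp

lemma Cn_mult: "open S \<Longrightarrow> Cn n S f \<Longrightarrow> Cn n S g \<Longrightarrow> Cn n S (\<lambda>x. f x * g x)"
proof (induction n arbitrary: f g)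
  case (Suc n)
  have df: "\<forall>s\<in>S. f differentiable at s" and dg: "\<forall>s\<in>S. g differentiable at s"
    and c1: "Cn n S (deriv f)" "Cn n S (deriv g)" using Suc.prems by (auto simp: Cn_Suc)
  have c0: "Cn n S f" "Cn n S g" using Suc.prems Cn_mono by auto
  have eq: "deriv f x * g x + f x * deriv g x = deriv (\<lambda>x. f x * g x) x" if "x\<in>S" for x
  proof -
    have "((\<lambda>x. f x * g x) has_real_derivative deriv f x * g x + deriv g x * f x) (at x)"
      using df dg that by (intro DERIV_mult dD) auto
    then show ?thesis by (simp add: DERIV_imp_deriv mult.commute)
  qed
  have "Cn n S (\<lambda>x. deriv f x * g x)" "Cn n S (\<lambda>x. f x * deriv g x)"
    using Suc.IH Suc.prems(1) c1 c0 by blast+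
  then have "Cn n S (\<lambda>x. deriv f x * g x + f x * deriv g x)" using Cn_add Suc.prems(1) by blast
  then have "Cn n S (deriv (\<lambda>x. f x * g x))" using Cn_local[OF Suc.prems(1), where f="\<lambda>x. deriv f x * g x + f x * deriv g x" and g="deriv (\<lambda>x. f x * g x)"] eq by blast
  moreover have "\<forall>s\<in>S. (\<lambda>x. f x * g x) differentiable at s" using df dg by auto
  ultimately show ?case by (simp add: Cn_Suc)
qed simp

lemma Cn_inverse: "open S \<Longrightarrow> (\<And>x. x\<in>S \<Longrightarrow> h x \<noteq> 0) \<Longrightarrow> Cn n S h \<Longrightarrow> Cn n S (\<lambda>x. inverse (h x))"
proof (induction n arbitrary: h)
  case (Suc n)
  have dh: "\<forall>s\<in>S. h differentiable at s" and c1: "Cn n S (deriv h)" using Suc.prems by (auto simp: Cn_Suc)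
  have c0: "Cn n S h" using Suc.prems Cn_mono by auto
  have eq: "(- 1 * deriv h x) * (inverse (h x) * inverse (h x)) = deriv (\<lambda>x. inverse (h x)) x" if "x\<in>S" for x
    using dh that Suc.prems(2)[OF that]
    by (intro DERIV_imp_deriv[symmetric]) (auto intro!: derivative_eq_intros dD simp: power2_eq_square)
  have ci: "Cn n S (\<lambda>x. inverse (h x))" using Suc.IH Suc.prems c0 by blast
  have "Cn n S (\<lambda>x. (- 1 * deriv h x) * (inverse (h x) * inverse (h x)))"
    using Cn_mult[OF Suc.prems(1)] Cn_mult[OF Suc.prems(1) Cn_const c1] ci by blast
  then have "Cn n S (deriv (\<lambda>x. inverse (h x)))" using Cn_local[OF Suc.prems(1), where f="\<lambda>x. (- 1 * deriv h x) * (inverse (h x) * inverse (h x))" and g="deriv (\<lambda>x. inverse (h x))"] eq by blast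
  moreover have "\<forall>s\<in>S. (\<lambda>x. inverse (h x)) differentiable at s" using dh Suc.prems(2)
    by (auto intro!: derivative_intros)
  ultimately show ?case by (simp add: Cn_Suc)
qed simp

lemma Cn_affine: "open S \<Longrightarrow> Cn n S f \<Longrightarrow> Cn n {x. a * x + b \<in> S} (\<lambda>x. f (a * x + b))"
proof (induction n arbitrary: f)
  case (Suc n)
  define T where "T = {x. a * x + b \<in> S}"
  have oT: "open T" unfolding T_def
    using open_vimage[OF Suc.prems(1), of "\<lambda>x. a * x + b"] by (simp add: vimage_def continuous_on_add continuous_on_mult_left)
  have df: "\<forall>s\<in>S. f differentiable at s" and c1: "Cn n S (deriv f)" using Suc.prems by (auto simp: Cn_Suc)
  have DD: "((\<lambda>x. f (a * x + b)) has_real_derivative deriv f (a*x+b) * a) (at x)" if "x\<in>T" for x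
  proof -
    have "(f has_real_derivative deriv f (a*x+b)) (at (a*x+b))" using df that T_def dD by auto
    then show "((\<lambda>x. f (a * x + b)) has_real_derivative deriv f (a*x+b) * a) (at x)"
      by (intro DERIV_chain2[where f=f]) (auto intro!: derivative_eq_intros)
  qed
  have eq: "a * deriv f (a * x + b) = deriv (\<lambda>x. f (a * x + b)) x" if "x\<in>T" for x
    using DD[OF that] by (simp add: DERIV_imp_deriv mult.commute)
  have "Cn n T (\<lambda>x. deriv f (a * x + b))" using Suc.IH Suc.prems(1) c1 T_def by blast
  then have "Cn n T (\<lambda>x. a * deriv f (a * x + b))" using Cn_mult[OF oT Cn_const] by blast
  then have "Cn n T (deriv (\<lambda>x. f (a * x + b)))" using Cn_local[OF oT, where f="\<lambda>x. a * deriv f (a * x + b)" and g="deriv (\<lambda>x. f (a * x + b))"] eq by blast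
  moreover have "\<forall>s\<in>T. (\<lambda>x. f (a * x + b)) differentiable at s"
    using DD real_differentiable_def by blast
  ultimately show ?case by (simp add: Cn_Suc T_def)
qed simp

lemma smooth_near_Cn: "smooth_near f x \<longleftrightarrow> (\<exists>S. open S \<and> x \<in> S \<and> (\<forall>n. Cn n S f))"
proof
  assume "smooth_near f x"
  then obtain e where "e>0" "\<forall>n. \<forall>s\<in>ball x e. (deriv ^^ n) f differentiable (at s)"
    unfolding smooth_near_def by blast
  then show "\<exists>S. open S \<and> x \<in> S \<and> (\<forall>n. Cn n S f)"
    by (intro exI[of _ "ball x e"]) (auto simp: Cn_def)
next
  assume "\<exists>S. open S \<and> x \<in> S \<and> (\<forall>n. Cn n S f)"
  then obtain S where S: "open S" "x\<in>S" "\<forall>n. Cn n S f" by blast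
  then obtain e where "e>0" "ball x e \<subseteq> S" using open_contains_ball by blast
  then show "smooth_near f x" unfolding smooth_near_def
    using S(3) by (intro exI[of _ e]) (auto simp: Cn_def)
qed

lemma snI: "open S \<Longrightarrow> x \<in> S \<Longrightarrow> (\<And>n. Cn n S f) \<Longrightarrow> smooth_near f x"
  using smooth_near_Cn by blast

lemma snE: assumes "smooth_near f x"
  obtains S where "open S" "x \<in> S" "\<And>n. Cn n S f"
  using assms smooth_near_Cn by blast

lemma sn_const: "smooth_near (\<lambda>y. k) x"
  by (rule snI[of UNIV]) (auto intro: Cn_const)

lemma sn_ident: "smooth_near (\<lambda>y. y) x"
  by (rule snI[of UNIV]) (auto intro: Cn_ident)

lemma sn_add: "smooth_near f x \<Longrightarrow> smooth_near g x \<Longrightarrow> smooth_near (\<lambda>y. f y + g y) x"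
proof -
  assume "smooth_near f x" "smooth_near g x"
  then obtain S T where "open S" "x \<in> S" "\<And>n. Cn n S f" "open T" "x \<in> T" "\<And>n. Cn n T g"
    by (metis snE)
  then show ?thesis
    by (intro snI[of "S \<inter> T"]) (auto intro!: Cn_add intro: Cn_subset)
qed

lemma sn_mult: "smooth_near f x \<Longrightarrow> smooth_near g x \<Longrightarrow> smooth_near (\<lambda>y. f y * g y) x"
proof -
  assume "smooth_near f x" "smooth_near g x"
  then obtain S T where "open S" "x \<in> S" "\<And>n. Cn n S f" "open T" "x \<in> T" "\<And>n. Cn n T g"
    by (metis snE)
  then show ?thesis
    by (intro snI[of "S \<inter> T"]) (auto intro!: Cn_mult intro: Cn_subset)
qed

lemma sn_inverse: "(\<And>y. h y \<noteq> 0) \<Longrightarrow> smooth_near h x \<Longrightarrow> smooth_near (\<lambda>y. inverse (h y)) x"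
proof -
  assume "\<And>y. h y \<noteq> 0" "smooth_near h x"
  then obtain S where "open S" "x \<in> S" "\<And>n. Cn n S h" by (metis snE)
  then show ?thesis using \<open>\<And>y. h y \<noteq> 0\<close>
    by (intro snI[of "S"]) (auto intro!: Cn_inverse)
qed

lemma sn_affine: "smooth_near f (a * x + b) \<Longrightarrow> smooth_near (\<lambda>y. f (a * y + b)) x"
proof -
  assume "smooth_near f (a * x + b)"
  then obtain S where S: "open S" "a * x + b \<in> S" "\<And>n. Cn n S f" by (metis snE)
  have "open {y. a * y + b \<in> S}"
    using open_vimage[OF S(1), of "\<lambda>x. a * x + b"] by (simp add: vimage_def continuous_on_add continuous_on_mult_left)
  then show ?thesis using S
    by (intro snI[of "{y. a * y + b \<in> S}"]) (auto intro!: Cn_affine)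
qed

lemma sn_local: "smooth_near f x \<Longrightarrow> open T \<Longrightarrow> x \<in> T \<Longrightarrow> (\<And>y. y\<in>T \<Longrightarrow> f y = g y) \<Longrightarrow> smooth_near g x"
proof -
  assume a: "smooth_near f x" "open T" "x \<in> T" "\<And>y. y\<in>T \<Longrightarrow> f y = g y"
  then obtain S where "open S" "x \<in> S" "\<And>n. Cn n S f" by (metis snE)
  then show ?thesis using a
    by (intro snI[of "S \<inter> T"]) (auto intro: Cn_local[where f=f] Cn_subset)
qed

lemma sn_sum: "finite A \<Longrightarrow> (\<And>p. p\<in>A \<Longrightarrow> smooth_near (F p) x) \<Longrightarrow> smooth_near (\<lambda>y. \<Sum>p\<in>A. F p y) x"
  by (induction A rule: finite_induct) (auto intro!: sn_add sn_const)

lemma sn_differentiable: "smooth_near f x \<Longrightarrow> f differentiable (at x)"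
  unfolding smooth_near_def by (metis centre_in_ball funpow_0)

lemma sn_isCont: "smooth_near f x \<Longrightarrow> isCont f x"
  using sn_differentiable differentiable_imp_continuous_within by blast

lemma sn_eventually: "smooth_near f x \<Longrightarrow> \<forall>\<^sub>F y in nhds x. smooth_near f y"
proof -
  assume "smooth_near f x"
  then obtain S where "open S" "x \<in> S" "\<And>n. Cn n S f" by (metis snE)
  then show ?thesis using eventually_nhds by (metis snI)
qed




definition phi :: "real \<Rightarrow> real" where
  "phi x = (if 0 < x then exp (- inverse x) else 0)"

fun PP :: "nat \<Rightarrow> real poly" where
  "PP 0 = 1"
| "PP (Suc n) = monom 1 2 * (PP n - pderiv (PP n))"

definition phid :: "nat \<Rightarrow> real \<Rightarrow> real" where
  "phid n x = (if 0 < x then poly (PP n) (inverse x) * exp (- inverse x) else 0)"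

lemma poly_exp_lim: fixes p :: "real poly" shows "((\<lambda>z. poly p z * z * exp (- z)) \<longlongrightarrow> 0) at_top"
proof -
  have eq: "poly p z * z * exp (- z) = (\<Sum>i\<le>degree p. coeff p i * (z ^ Suc i / exp z))" for z :: real
  proof -
    have "poly p z * z * exp (- z) = (\<Sum>i\<le>degree p. coeff p i * z^i) * (z * inverse (exp z))"
      by (simp only: poly_altdef exp_minus mult.assoc)
    also have "\<dots> = (\<Sum>i\<le>degree p. coeff p i * z^i * (z * inverse (exp z)))"
      by (rule sum_distrib_right)
    also have "\<dots> = (\<Sum>i\<le>degree p. coeff p i * (z ^ Suc i / exp z))"
      by (intro sum.cong refl) (simp add: divide_inverse mult_ac)
    finally show ?thesis .
  qed
  have "((\<lambda>z. \<Sum>i\<le>degree p. coeff p i * (z ^ Suc i / exp z)) \<longlongrightarrow> (\<Sum>i\<le>degree p. coeff p i * 0)) at_top"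
    by (intro tendsto_sum tendsto_mult tendsto_const tendsto_power_div_exp_0)
  then show ?thesis by (simp add: eq)
qed

lemma phid_deriv: "(phid n has_real_derivative phid (Suc n) x) (at x)"
proof (cases "0 < x")
  case True
  let ?q = "\<lambda>x. poly (PP n) (inverse x) * exp (- inverse x)"
  have h1: "((\<lambda>x. poly (PP n) (inverse x)) has_real_derivative poly (pderiv (PP n)) (inverse x) * (- (inverse x ^ 2))) (at x)"
    using DERIV_chain2[OF poly_DERIV DERIV_inverse[of x UNIV]] True by (simp add: eval_nat_numeral)
  have h2: "((\<lambda>x. exp (- inverse x)) has_real_derivative exp (- inverse x) * (inverse x ^ 2)) (at x)"
    using DERIV_chain2[OF DERIV_exp DERIV_minus[OF DERIV_inverse[of x UNIV]]] True by (simp add: eval_nat_numeral)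
  have d0: "(?q has_real_derivative (poly (pderiv (PP n)) (inverse x) * (- (inverse x ^ 2))) * exp (- inverse x)
      + (exp (- inverse x) * (inverse x ^ 2)) * poly (PP n) (inverse x)) (at x)"
    by (rule DERIV_mult[OF h1 h2])
  have alg: "(p' * (- (y ^ 2))) * E + (E * (y ^ 2)) * p = y^2 * (p - p') * E" for p' y E p :: real
    by (simp add: algebra_simps)
  have d: "(?q has_real_derivative phid (Suc n) x) (at x)"
  proof -
    have "phid (Suc n) x = poly (monom 1 2 * (PP n - pderiv (PP n))) (inverse x) * exp (- inverse x)"
      using True unfolding phid_def by (simp only: PP.simps if_True)
    also have "\<dots> = (inverse x)^2 * (poly (PP n) (inverse x) - poly (pderiv (PP n)) (inverse x)) * exp (- inverse x)"
      by (simp only: poly_mult poly_monom poly_diff mult_1)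
    finally have e: "phid (Suc n) x = (inverse x)^2 * (poly (PP n) (inverse x) - poly (pderiv (PP n)) (inverse x)) * exp (- inverse x)" .
    show ?thesis by (rule DERIV_cong[OF d0]) (unfold e, rule alg)
  qed
  show ?thesis
    by (rule has_field_derivative_transform_within_open[OF d, of "{0<..}"]) (use True in \<open>auto simp: phid_def\<close>)
next
  case False
  show ?thesis
  proof (cases "x < 0")
    case True
    have d: "((\<lambda>x. 0) has_real_derivative 0) (at x)" by simp
    have z: "phid (Suc n) x = 0" using True by (simp add: phid_def)
    show ?thesis unfolding z
      by (rule has_field_derivative_transform_within_open[OF d, of "{..<0}"]) (use True in \<open>auto simp: phid_def\<close>)
  next
    case False
    with \<open>\<not> 0 < x\<close> have x0: "x = 0" by simp
    have "((\<lambda>y. (phid n y - phid n 0) / (y - 0)) \<longlongrightarrow> 0) (at 0)"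
    proof (rule filterlim_split_at)
      have "\<forall>\<^sub>F y in at_left (0::real). (phid n y - phid n 0) / (y - 0) = 0"
        by (auto simp: eventually_at_left_field phid_def intro: exI[of _ "-1"])
      then show "((\<lambda>y. (phid n y - phid n 0) / (y - 0)) \<longlongrightarrow> 0) (at_left 0)"
        by (rule tendsto_eventually)
    next
      have lim: "((\<lambda>y. poly (PP n) (inverse y) * inverse y * exp (- inverse y)) \<longlongrightarrow> 0) (at_right 0)"
        using filterlim_compose[OF poly_exp_lim filterlim_inverse_at_top_right] .
      have "\<forall>\<^sub>F y in at_right (0::real). poly (PP n) (inverse y) * inverse y * exp (- inverse y) = (phid n y - phid n 0) / (y - 0)"
        by (auto simp: eventually_at_right_field phid_def divide_inverse intro: exI[of _ 1])
      then show "((\<lambda>y. (phid n y - phid n 0) / (y - 0)) \<longlongrightarrow> 0) (at_right 0)"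
        using lim tendsto_cong by fastforce
    qed
    then have "(phid n has_real_derivative 0) (at 0)" by (simp add: has_field_derivative_iff)
    then show ?thesis using x0 by (simp add: phid_def)
  qed
qed

lemma deriv_phi: "(deriv ^^ n) phi = phid n"
proof (induction n)
  case 0
  then show ?case by (auto simp: phi_def phid_def)
next
  case (Suc n)
  then show ?case by (auto intro!: ext DERIV_imp_deriv phid_deriv)
qed

lemma Cn_phi: "Cn n UNIV phi"
  unfolding Cn_def deriv_phi using phid_deriv real_differentiable_def by blast

lemma sn_phi: "smooth_near phi x"
  by (rule snI[of UNIV]) (auto intro: Cn_phi)

lemma phi_nonneg: "phi x \<ge> 0" by (simp add: phi_def)
lemma phi_pos: "x > 0 \<Longrightarrow> phi x > 0" by (simp add: phi_def)
lemma phi_zero: "x \<le> 0 \<Longrightarrow> phi x = 0" by (simp add: phi_def)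

lemma sn_shift: "smooth_near f (x - b) \<Longrightarrow> smooth_near (\<lambda>y. f (y - b)) x"
  using sn_affine[of f 1 x "-b"] by simp

lemma sn_refl: "smooth_near f (b - x) \<Longrightarrow> smooth_near (\<lambda>y. f (b - y)) x"
  using sn_affine[of f "-1" x b] by simp

definition stp :: "real \<Rightarrow> real \<Rightarrow> real" where
  "stp d x = phi x * inverse (phi x + phi (d - x))"

lemma stp_den: assumes "d > 0" shows "phi x + phi (d - x) > 0"
proof (cases "x > 0")
  case True
  then show ?thesis using phi_pos[of x] phi_nonneg[of "d-x"] by linarith
next
  case False
  then show ?thesis using assms phi_pos[of "d-x"] phi_nonneg[of x] by linarith
qed

lemma sn_stp: "d > 0 \<Longrightarrow> smooth_near (stp d) x"
  unfolding stp_def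
  by (intro sn_mult sn_phi sn_inverse sn_add sn_refl) (use stp_den in \<open>auto simp: less_imp_neq[symmetric]\<close>)

lemma stp_0: "x \<le> 0 \<Longrightarrow> stp d x = 0" by (simp add: stp_def phi_zero)
lemma stp_1: "d > 0 \<Longrightarrow> x \<ge> d \<Longrightarrow> stp d x = 1"
  using stp_den[of d x] by (simp add: stp_def phi_zero)
lemma stp_ge0: "d > 0 \<Longrightarrow> stp d x \<ge> 0"
  using stp_den[of d x] phi_nonneg[of x] by (simp add: stp_def)
lemma stp_le1: "d > 0 \<Longrightarrow> stp d x \<le> 1"
  using stp_den[of d x] phi_nonneg[of x] phi_nonneg[of "d - x"] by (simp add: stp_def field_simps)
lemma stp_pos: "d > 0 \<Longrightarrow> x > 0 \<Longrightarrow> stp d x > 0"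
  using stp_den[of d x] phi_pos[of x] by (simp add: stp_def)

definition plat :: "real \<Rightarrow> real \<Rightarrow> real \<Rightarrow> real" where
  "plat d p t = stp d (t - (p - 2*d)) * stp d ((p + 2*d) - t)"

lemma sn_plat: "d > 0 \<Longrightarrow> smooth_near (plat d p) x"
  unfolding plat_def by (intro sn_mult sn_shift sn_refl sn_stp)

lemma plat_1: "d > 0 \<Longrightarrow> \<bar>t - p\<bar> \<le> d \<Longrightarrow> plat d p t = 1"
  unfolding plat_def by (subst stp_1, simp, simp)+ simp

lemma plat_0: "\<bar>t - p\<bar> \<ge> 2*d \<Longrightarrow> plat d p t = 0"
  unfolding plat_def by (cases "t \<le> p") (auto simp: stp_0)

lemma plat_ge0: "d > 0 \<Longrightarrow> plat d p t \<ge> 0"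
  unfolding plat_def by (intro mult_nonneg_nonneg stp_ge0)

lemma plat_le1: "d > 0 \<Longrightarrow> plat d p t \<le> 1"
  unfolding plat_def by (intro mult_le_one stp_le1 stp_ge0)

definition bump :: "real \<Rightarrow> real \<Rightarrow> real \<Rightarrow> real" where
  "bump p h t = phi (t - (p - h)) * phi ((p + h) - t)"

lemma sn_bump: "smooth_near (bump p h) x"
  unfolding bump_def by (intro sn_mult sn_shift sn_refl sn_phi)

lemma bump_ge0: "bump p h t \<ge> 0"
  unfolding bump_def by (intro mult_nonneg_nonneg phi_nonneg)

lemma bump_0: "\<bar>t - p\<bar> \<ge> h \<Longrightarrow> bump p h t = 0"
  unfolding bump_def by (cases "t \<le> p") (auto simp: phi_zero)

lemma bump_pos: "\<bar>t - p\<bar> < h \<Longrightarrow> bump p h t > 0"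
  unfolding bump_def by (intro mult_pos_pos phi_pos) auto




lemma integral_pos_pt:
  fixes f :: "real \<Rightarrow> real"
  assumes "continuous_on {a..b} f" "a < b" "\<And>x. x \<in> {a..b} \<Longrightarrow> f x \<ge> 0" "m \<in> {a..b}" "f m > 0"
  shows "integral {a..b} f > 0"
proof -
  have "integral {a..b} f \<ge> 0"
    using assms by (intro integral_nonneg integrable_continuous_real) auto
  moreover have "integral {a..b} f \<noteq> 0"
    using integral_eq_0_iff[OF assms(1,2,3)] assms(4,5) by auto
  ultimately show ?thesis by linarith
qed

lemma integral_neg_pt:
  fixes f :: "real \<Rightarrow> real"
  assumes "continuous_on {a..b} f" "a < b" "\<And>x. x \<in> {a..b} \<Longrightarrow> f x \<le> 0" "m \<in> {a..b}" "f m < 0"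
  shows "integral {a..b} f < 0"
proof -
  have "integral {a..b} (\<lambda>x. - f x) > 0"
    using assms by (intro integral_pos_pt[of a b _ m] continuous_intros) auto
  then show ?thesis by (simp add: integral_neg integrable_continuous_real assms(1))
qed

lemma Cn_of_sn: "(\<And>s. s \<in> S \<Longrightarrow> smooth_near f s) \<Longrightarrow> Cn n S f"
  unfolding Cn_def smooth_near_def by (metis centre_in_ball)

lemma atmost_one_finite: "(\<And>x y. x \<in> A \<Longrightarrow> y \<in> A \<Longrightarrow> x = y) \<Longrightarrow> finite A"
  by (metis finite.emptyI finite_insert insertI1 subsetI finite_subset equals0I)

lemma finite_small:
  fixes Q :: "'a \<Rightarrow> real \<Rightarrow> bool"
  assumes "finite A" "\<And>x. x \<in> A \<Longrightarrow> \<exists>d0>0. \<forall>d. 0 < d \<and> d \<le> d0 \<longrightarrow> Q x d"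
  shows "\<exists>d0>0. \<forall>d. 0 < d \<and> d \<le> d0 \<longrightarrow> (\<forall>x\<in>A. Q x d)"
  using assms
proof (induction A rule: finite_induct)
  case empty
  have "(1::real) > 0" by simp
  then show ?case by blast
next
  case (insert a A)
  then obtain d1 where d1: "d1 > 0" "\<forall>d. 0 < d \<and> d \<le> d1 \<longrightarrow> (\<forall>x\<in>A. Q x d)" by blast
  obtain d2 where d2: "d2 > 0" "\<forall>d. 0 < d \<and> d \<le> d2 \<longrightarrow> Q a d" using insert.prems by blast
  show ?case using d1 d2 by (intro exI[of _ "min d1 d2"]) auto
qed

locale RG =
  fixes V :: "'v set" and E :: "'e set" and src tgt :: "'e \<Rightarrow> 'v"
    and fv :: "'v \<Rightarrow> real" and B :: "'v set"
    and dens c :: "'e \<Rightarrow> real \<Rightarrow> real"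
    and r :: "('v, 'e) gpt \<Rightarrow> real" and g :: "('v, 'e) gpt \<Rightarrow> real \<Rightarrow> real"
  assumes rg: "reeb_graph V E src tgt fv B"
    and ls: "log_smooth V E src tgt fv dens"
    and circ: "circulation V E src tgt fv B dens c"
    and bal: "balanced V E src tgt fv c"
    and loc: "\<forall>p\<in>exceptional V E src tgt fv c. local_form_ok E src tgt fv c p (r p) (g p)"
begin

abbreviation "lo e \<equiv> fv (src e)"
abbreviation "hi e \<equiv> fv (tgt e)"

lemma finE: "finite E" using rg by (simp add: reeb_graph_def)

lemma edge: "e \<in> E \<Longrightarrow> src e \<in> V \<and> tgt e \<in> V \<and> lo e < hi e"
  using rg by (simp add: reeb_graph_def)

lemma dens_sn: "e \<in> E \<Longrightarrow> lo e < t \<Longrightarrow> t < hi e \<Longrightarrow> smooth_near (dens e) t \<and> dens e t > 0"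
  using ls by (simp add: log_smooth_def)

lemma c_int: "e \<in> E \<Longrightarrow> lo e < x \<Longrightarrow> x \<le> y \<Longrightarrow> y < hi e \<Longrightarrow>
    c e y - c e x = integral {x..y} (\<lambda>t. t * dens e t)"
  using circ by (simp add: circulation_def)

lemma c_lims: "e \<in> E \<Longrightarrow> (\<exists>L. (c e \<longlongrightarrow> L) (at_right (lo e))) \<and> (\<exists>L. (c e \<longlongrightarrow> L) (at_left (hi e)))"
  using circ by (simp add: circulation_def)

lemma td_sn: "e \<in> E \<Longrightarrow> lo e < t \<Longrightarrow> t < hi e \<Longrightarrow> smooth_near (\<lambda>t. t * dens e t) t"
  using dens_sn by (intro sn_mult sn_ident) auto

lemma td_cont: "e \<in> E \<Longrightarrow> lo e < x \<Longrightarrow> y < hi e \<Longrightarrow> continuous_on {x..y} (\<lambda>t. t * dens e t)"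
  by (intro continuous_at_imp_continuous_on ballI sn_isCont td_sn) auto

lemma c_deriv: assumes "e \<in> E" "lo e < x" "x < hi e"
  shows "(c e has_real_derivative x * dens e x) (at x)"
proof -
  define a where "a = (lo e + x) / 2"
  define b where "b = (x + hi e) / 2"
  have ab: "lo e < a" "a < x" "x < b" "b < hi e" using assms by (auto simp: a_def b_def)
  have "((\<lambda>u. integral {a..u} (\<lambda>t. t * dens e t)) has_vector_derivative x * dens e x) (at x within {a..b})"
    using ab by (intro integral_has_vector_derivative td_cont assms) auto
  then have "((\<lambda>u. integral {a..u} (\<lambda>t. t * dens e t)) has_vector_derivative x * dens e x) (at x)"
    using ab by (simp add: at_within_Icc_at)
  then have "((\<lambda>u. c e a + integral {a..u} (\<lambda>t. t * dens e t)) has_real_derivative x * dens e x) (at x)"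
    by (intro DERIV_add[where D=0, simplified] DERIV_const) (simp add: has_real_derivative_iff_has_vector_derivative)
  then show ?thesis
  proof (rule has_field_derivative_transform_within_open[where S="{a<..<b}"])
    fix u assume "u \<in> {a<..<b}"
    then show "c e a + integral {a..u} (\<lambda>t. t * dens e t) = c e u"
      using c_int[OF assms(1), of a u] ab by auto
  qed (use ab in auto)
qed

lemma c_sn: assumes "e \<in> E" "lo e < x" "x < hi e" shows "smooth_near (c e) x"
proof (rule snI[of "{lo e<..<hi e}"])
  fix n
  show "Cn n {lo e<..<hi e} (c e)"
  proof (cases n)
    case (Suc m)
    have "Cn m {lo e<..<hi e} (\<lambda>t. t * dens e t)"
      using td_sn[OF assms(1)] by (intro Cn_of_sn) auto
    moreover have "\<And>t. t \<in> {lo e<..<hi e} \<Longrightarrow> t * dens e t = deriv (c e) t"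
      using c_deriv[OF assms(1)] by (auto intro: DERIV_imp_deriv[symmetric])
    ultimately have "Cn m {lo e<..<hi e} (deriv (c e))"
      using Cn_local[of "{lo e<..<hi e}" "\<lambda>t. t * dens e t" "deriv (c e)" m] by auto
    moreover have "\<forall>s\<in>{lo e<..<hi e}. c e differentiable at s"
      using c_deriv[OF assms(1)] real_differentiable_def by fastforce
    ultimately show ?thesis using Suc by (simp add: Cn_Suc)
  qed simp
qed (use assms in auto)

lemma c_mono_pos: assumes "e \<in> E" "lo e < x" "x < y" "y < hi e" "0 \<le> x"
  shows "c e x < c e y"
proof -
  have "integral {x..y} (\<lambda>t. t * dens e t) > 0"
  proof (rule integral_pos_pt[of x y _ y])
    show "continuous_on {x..y} (\<lambda>t. t * dens e t)" using assms by (intro td_cont) auto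
    show "t * dens e t \<ge> 0" if "t \<in> {x..y}" for t
      using that assms dens_sn[of e t] by (auto intro!: mult_nonneg_nonneg)
    show "y * dens e y > 0" using assms dens_sn[of e y] by auto
  qed (use assms in auto)
  then show ?thesis using c_int[of e x y] assms by auto
qed

lemma c_mono_neg: assumes "e \<in> E" "lo e < x" "x < y" "y < hi e" "y \<le> 0"
  shows "c e x > c e y"
proof -
  have "integral {x..y} (\<lambda>t. t * dens e t) < 0"
  proof (rule integral_neg_pt[of x y _ x])
    show "continuous_on {x..y} (\<lambda>t. t * dens e t)" using assms by (intro td_cont) auto
    show "t * dens e t \<le> 0" if "t \<in> {x..y}" for t
      using that assms dens_sn[of e t] by (auto intro!: mult_nonpos_nonneg)
    show "x * dens e x < 0" using assms dens_sn[of e x] by (auto intro!: mult_neg_pos)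
  qed (use assms in auto)
  then show ?thesis using c_int[of e x y] assms by auto
qed

end



context RG begin

definition Z :: "'e \<Rightarrow> real set" where
  "Z e = {t. lo e < t \<and> t < hi e \<and> (t = 0 \<or> c e t = 0)}"

abbreviation "EXC \<equiv> exceptional V E src tgt fv c"

lemma exc_EPt: "EPt e t \<in> EXC \<longleftrightarrow> e \<in> E \<and> t \<in> Z e"
  by (auto simp: exceptional_def Z_def)

lemma exc_Vert: "Vert v \<in> EXC \<longleftrightarrow> v \<in> V"
  by (auto simp: exceptional_def)

lemma Z_finite: assumes "e \<in> E" shows "finite (Z e)"
proof -
  have A: "finite {t\<in>Z e. t < 0}"
  proof (rule atmost_one_finite)
    fix x y assume "x \<in> {t\<in>Z e. t < 0}" "y \<in> {t\<in>Z e. t < 0}"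
    then have h: "lo e < x" "x < 0" "c e x = 0" "lo e < y" "y < 0" "c e y = 0" "x < hi e" "y < hi e"
      by (auto simp: Z_def)
    show "x = y"
    proof (rule ccontr)
      assume "x \<noteq> y"
      then consider "x < y" | "y < x" by linarith
      then show False
        by cases (use c_mono_neg[OF assms, of x y] c_mono_neg[OF assms, of y x] h in auto)
    qed
  qed
  have B: "finite {t\<in>Z e. t > 0}"
  proof (rule atmost_one_finite)
    fix x y assume "x \<in> {t\<in>Z e. t > 0}" "y \<in> {t\<in>Z e. t > 0}"
    then have h: "lo e < x" "x > 0" "c e x = 0" "lo e < y" "y > 0" "c e y = 0" "x < hi e" "y < hi e"
      by (auto simp: Z_def)
    show "x = y"
    proof (rule ccontr)
      assume "x \<noteq> y"
      then consider "x < y" | "y < x" by linarith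
      then show False
        by cases (use c_mono_pos[OF assms, of x y] c_mono_pos[OF assms, of y x] h in auto)
    qed
  qed
  have "Z e \<subseteq> {0} \<union> {t\<in>Z e. t < 0} \<union> {t\<in>Z e. t > 0}" by auto
  then show ?thesis using A B finite_subset by blast
qed

definition Pos :: "'e \<Rightarrow> bool" where "Pos e \<longleftrightarrow> (\<exists>t. lo e < t \<and> t < hi e \<and> t * c e t > 0)"
definition Neg :: "'e \<Rightarrow> bool" where "Neg e \<longleftrightarrow> (\<exists>t. lo e < t \<and> t < hi e \<and> t * c e t < 0)"

lemma c_isCont: "e \<in> E \<Longrightarrow> lo e < x \<Longrightarrow> x < hi e \<Longrightarrow> isCont (c e) x"
  using c_sn sn_isCont by blast

lemma Z_both: assumes e: "e \<in> E" and z: "z \<in> Z e" shows "Pos e \<and> Neg e"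
proof -
  have z1: "lo e < z" "z < hi e" "z = 0 \<or> c e z = 0" using z by (auto simp: Z_def)
  consider "z > 0" | "z < 0" | "z = 0" by linarith
  then show ?thesis
  proof cases
    case 1
    then have cz: "c e z = 0" using z1 by auto
    define y where "y = (z + hi e) / 2"
    define x where "x = (max (lo e) 0 + z) / 2"
    have "c e z < c e y" using c_mono_pos[OF e, of z y] z1 1 by (auto simp: y_def)
    moreover have "c e x < c e z" using c_mono_pos[OF e, of x z] z1 1 by (auto simp: x_def)
    moreover have "x > 0" "y > 0" "lo e < x" "x < hi e" "lo e < y" "y < hi e" using z1 1 by (auto simp: x_def y_def)
    ultimately have "x * c e x < 0" "y * c e y > 0" using cz by (auto intro: mult_pos_pos mult_pos_neg)
    then show ?thesis unfolding Pos_def Neg_def using \<open>lo e < x\<close> \<open>x < hi e\<close> \<open>lo e < y\<close> \<open>y < hi e\<close> by blast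
  next
    case 2
    then have cz: "c e z = 0" using z1 by auto
    define x where "x = (lo e + z) / 2"
    define y where "y = (z + min (hi e) 0) / 2"
    have "c e x > c e z" using c_mono_neg[OF e, of x z] z1 2 by (auto simp: x_def)
    moreover have "c e z > c e y" using c_mono_neg[OF e, of z y] z1 2 by (auto simp: y_def)
    moreover have "x < 0" "y < 0" "lo e < x" "x < hi e" "lo e < y" "y < hi e" using z1 2 by (auto simp: x_def y_def)
    ultimately have "x * c e x < 0" "y * c e y > 0" using cz by (auto intro: mult_neg_neg mult_neg_pos)
    then show ?thesis unfolding Pos_def Neg_def using \<open>lo e < x\<close> \<open>x < hi e\<close> \<open>lo e < y\<close> \<open>y < hi e\<close> by blast
  next
    case 3
    show ?thesis
    proof (cases "c e 0 \<ge> 0")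
      case True
      define x where "x = lo e / 2"
      define y where "y = hi e / 2"
      have "c e x > c e 0" using c_mono_neg[OF e, of x 0] z1 3 by (auto simp: x_def)
      moreover have "c e 0 < c e y" using c_mono_pos[OF e, of 0 y] z1 3 by (auto simp: y_def)
      moreover have "x < 0" "y > 0" "lo e < x" "x < hi e" "lo e < y" "y < hi e" using z1 3 by (auto simp: x_def y_def)
      ultimately have "x * c e x < 0" "y * c e y > 0" using True by (auto intro: mult_neg_pos mult_pos_pos)
      then show ?thesis unfolding Pos_def Neg_def using \<open>lo e < x\<close> \<open>x < hi e\<close> \<open>lo e < y\<close> \<open>y < hi e\<close> by blast
    next
      case False
      have "isCont (c e) 0" using c_isCont[OF e] z1 3 by auto
      then have "\<forall>\<^sub>F t in nhds 0. c e t < 0" using False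
        by (metis isCont_def not_le order_tendstoD(2) tendsto_nhds_iff)
      then obtain ep where ep: "ep > 0" "\<And>t. \<bar>t\<bar> < ep \<Longrightarrow> c e t < 0"
        by (auto simp: eventually_nhds_metric dist_real_def)
      define x where "x = max (lo e / 2) (- ep / 2)"
      define y where "y = min (hi e / 2) (ep / 2)"
      have "x < 0" "y > 0" "lo e < x" "x < hi e" "lo e < y" "y < hi e" "\<bar>x\<bar> < ep" "\<bar>y\<bar> < ep"
        using z1 3 ep by (auto simp: x_def y_def)
      moreover have "x * c e x > 0" "y * c e y < 0" using ep(2) calculation by (auto intro: mult_neg_neg mult_pos_neg)
      ultimately show ?thesis unfolding Pos_def Neg_def by blast
    qed
  qed
qed

definition mid :: "'e \<Rightarrow> real" where "mid e = (lo e + hi e) / 2"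

lemma mid: "e \<in> E \<Longrightarrow> lo e < mid e \<and> mid e < hi e"
  using edge[of e] by (auto simp: mid_def)

lemma PosNeg: assumes "e \<in> E" shows "Pos e \<or> Neg e"
proof (cases "mid e \<in> Z e")
  case True then show ?thesis using Z_both assms by blast
next
  case False
  then have "mid e * c e (mid e) \<noteq> 0" using mid[OF assms] by (auto simp: Z_def)
  then show ?thesis using mid[OF assms] unfolding Pos_def Neg_def
    by (metis linorder_neqE_linordered_idom)
qed

lemma noNeg: assumes "e \<in> E" "\<not> Neg e" "lo e < t" "t < hi e" shows "t * c e t > 0"
proof -
  have "t \<notin> Z e" using Z_both assms by blast
  then have "t * c e t \<noteq> 0" using assms by (auto simp: Z_def)
  moreover have "\<not> t * c e t < 0" using assms(2-4) unfolding Neg_def by blast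
  ultimately show ?thesis by linarith
qed

lemma noPos: assumes "e \<in> E" "\<not> Pos e" "lo e < t" "t < hi e" shows "t * c e t < 0"
proof -
  have "t \<notin> Z e" using Z_both assms by blast
  then have "t * c e t \<noteq> 0" using assms by (auto simp: Z_def)
  moreover have "\<not> t * c e t > 0" using assms(2-4) unfolding Pos_def by blast
  ultimately show ?thesis by linarith
qed

definition cedge :: "'e \<Rightarrow> bool" where "cedge e \<longleftrightarrow> e \<in> E \<and> \<not> (Pos e \<and> Neg e)"

lemma cedge_signs: assumes "cedge e"
  shows "(lo e \<ge> 0 \<or> hi e \<le> 0) \<and> (\<forall>t. lo e < t \<and> t < hi e \<longrightarrow> sgn (c e t) = sgn (c e (mid e))) \<and> c e (mid e) \<noteq> 0"
proof -
  have e: "e \<in> E" using assms by (simp add: cedge_def)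
  have H: "(\<forall>t. lo e < t \<and> t < hi e \<longrightarrow> t * c e t > 0) \<or> (\<forall>t. lo e < t \<and> t < hi e \<longrightarrow> t * c e t < 0)"
    using assms noNeg noPos by (auto simp: cedge_def)
  have lh: "lo e \<ge> 0 \<or> hi e \<le> 0"
  proof (rule ccontr)
    assume "\<not> (lo e \<ge> 0 \<or> hi e \<le> 0)"
    then have "lo e < 0" "0 < hi e" by linarith+
    then show False using H by (metis less_irrefl mult_zero_left)
  qed
  have m: "lo e < mid e" "mid e < hi e" using mid[OF e] by auto
  show ?thesis
  proof (intro conjI allI impI)
    fix t assume t: "lo e < t \<and> t < hi e"
    have "sgn t = sgn (mid e)" using lh t m by (auto simp: sgn_if)
    moreover have "sgn (t * c e t) = sgn (mid e * c e (mid e))" using H t m by auto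
    ultimately show "sgn (c e t) = sgn (c e (mid e))"
      by (metis sgn_mult mult_cancel_left sgn_0_0 less_irrefl mult_zero_left H t m)
  qed (use lh H m in auto)
qed

end



lemma sgn_lim:
  fixes f :: "'a \<Rightarrow> real"
  assumes "(f \<longlongrightarrow> L) F" "\<not> trivial_limit F" "eventually (\<lambda>t. sgn (f t) = s) F" "L \<noteq> 0" "s \<noteq> 0"
  shows "sgn L = s"
proof -
  have "s = 1 \<or> s = -1"
  proof -
    obtain t where "sgn (f t) = s" using eventually_happens[OF assms(3)] assms(2) by auto
    then show ?thesis using assms(5) by (auto simp: sgn_if split: if_splits)
  qed
  then show ?thesis
  proof
    assume s: "s = 1"
    have "eventually (\<lambda>t. 0 \<le> f t) F" using assms(3) by (rule eventually_mono) (auto simp: s sgn_if split: if_splits)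
    then have "0 \<le> L" using tendsto_lowerbound[OF assms(1) _ assms(2)] by blast
    then show ?thesis using assms(4) s by simp
  next
    assume s: "s = -1"
    have "eventually (\<lambda>t. f t \<le> 0) F" using assms(3) by (rule eventually_mono) (auto simp: s sgn_if split: if_splits)
    then have "L \<le> 0" using tendsto_upperbound[OF assms(1) _ assms(2)] by blast
    then show ?thesis using assms(4) s by simp
  qed
qed

context RG begin

lemma lim_sgn: assumes ce: "cedge e" and inc: "src e = v \<or> tgt e = v" and nz: "lim_at src tgt fv c v e \<noteq> 0"
  shows "sgn (lim_at src tgt fv c v e) = sgn (c e (mid e))"
proof -
  have e: "e \<in> E" using ce by (simp add: cedge_def)
  have cs: "\<And>t. lo e < t \<Longrightarrow> t < hi e \<Longrightarrow> sgn (c e t) = sgn (c e (mid e))"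
    using cedge_signs[OF ce] by auto
  have "c e (mid e) \<noteq> 0" using cedge_signs[OF ce] by auto
  then have nz2: "sgn (c e (mid e)) \<noteq> 0" by (simp add: sgn_0_0)
  have lh: "lo e < hi e" using edge[OF e] by simp
  show ?thesis
  proof (cases "tgt e = v")
    case True
    obtain L where L: "(c e \<longlongrightarrow> L) (at_left (hi e))" using c_lims[OF e] by blast
    have lim: "lim_at src tgt fv c v e = L"
      using True L by (simp add: lim_at_def lim_tgt_def tendsto_Lim)
    have "eventually (\<lambda>t. sgn (c e t) = sgn (c e (mid e))) (at_left (hi e))"
      using eventually_at_left_real[OF lh] by (rule eventually_mono) (auto intro: cs)
    then show ?thesis using sgn_lim[OF L _ _ _ nz2] nz lim by simp
  next
    case False
    then have sv: "src e = v" using inc by simp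
    obtain L where L: "(c e \<longlongrightarrow> L) (at_right (lo e))" using c_lims[OF e] by blast
    have lim: "lim_at src tgt fv c v e = L"
      using False sv L by (simp add: lim_at_def lim_src_def tendsto_Lim)
    have "eventually (\<lambda>t. sgn (c e t) = sgn (c e (mid e))) (at_right (lo e))"
      using eventually_at_right_real[OF lh] by (rule eventually_mono) (auto intro: cs)
    then show ?thesis using sgn_lim[OF L _ _ _ nz2] nz lim by simp
  qed
qed

lemma val13: assumes "v \<in> V" shows "valence E src tgt v = 1 \<or> valence E src tgt v = 3"
proof -
  have "(indeg E tgt v, outdeg E src v) \<in> {(1,0), (0,1), (2,1), (1,2)}"
    using rg[unfolded reeb_graph_def] assms by (elim conjE) (rule bspec)
  then show ?thesis unfolding valence_def by auto
qed

lemma val1_unique: assumes v: "v \<in> V" "valence E src tgt v = 1"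
  and e: "e \<in> E" "incident src tgt v e" and e': "e' \<in> E" "incident src tgt v e'"
  shows "e = e'"
proof -
  have fT: "finite {e\<in>E. tgt e = v}" and fS: "finite {e\<in>E. src e = v}" using finE by auto
  have "indeg E tgt v + outdeg E src v = 1" using v by (simp add: valence_def)
  then consider "card {e\<in>E. tgt e = v} = 1" "card {e\<in>E. src e = v} = 0"
    | "card {e\<in>E. tgt e = v} = 0" "card {e\<in>E. src e = v} = 1"
    unfolding indeg_def outdeg_def by linarith
  then show ?thesis
  proof cases
    case 1
    then have "{e\<in>E. src e = v} = {}" using fS by simp
    moreover obtain x where x: "{e\<in>E. tgt e = v} = {x}" using 1 card_1_singletonE by blast
    ultimately have "tgt e = v" "tgt e' = v" using e e' unfolding incident_def by blast+
    then have "e \<in> {x}" "e' \<in> {x}" using e(1) e'(1) x by blast+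
    then show ?thesis by simp
  next
    case 2
    then have "{e\<in>E. tgt e = v} = {}" using fT by simp
    moreover obtain x where x: "{e\<in>E. src e = v} = {x}" using 2 card_1_singletonE by blast
    ultimately have "src e = v" "src e' = v" using e e' unfolding incident_def by blast+
    then have "e \<in> {x}" "e' \<in> {x}" using e(1) e'(1) x by blast+
    then show ?thesis by simp
  qed
qed

definition ce :: "'v \<Rightarrow> 'e" where "ce v = (SOME e. cedge e \<and> incident src tgt v e)"
definition kap :: "'v \<Rightarrow> real" where "kap v = sgn (c (ce v) (mid (ce v)))"

lemma kap_cedge: assumes "cedge e" "incident src tgt v e" shows "kap v = sgn (c e (mid e))"
proof -
  have e: "e \<in> E" using assms by (simp add: cedge_def)
  have v: "v \<in> V" using edge[OF e] assms(2) by (auto simp: incident_def)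
  have e': "cedge (ce v) \<and> incident src tgt v (ce v)"
    unfolding ce_def by (rule someI_ex) (use assms in blast)
  then have e'E: "ce v \<in> E" by (simp add: cedge_def)
  show ?thesis
  proof (cases "valence E src tgt v = 1")
    case True
    then have "ce v = e" using val1_unique[OF v True e'E _ e assms(2)] e' by blast
    then show ?thesis by (simp add: kap_def)
  next
    case False
    then have v3: "valence E src tgt v = 3" using val13[OF v] by simp
    have B: "(\<forall>e\<in>E. incident src tgt v e \<longrightarrow> lim_at src tgt fv c v e > 0) \<or>
        (\<forall>e\<in>E. incident src tgt v e \<longrightarrow> lim_at src tgt fv c v e < 0)"
      using bal v v3 by (simp add: balanced_def)
    have i1: "incident src tgt v (ce v)" using e' by blast
    have eq: "sgn (lim_at src tgt fv c v e) = sgn (lim_at src tgt fv c v (ce v))"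
      and n1: "lim_at src tgt fv c v e \<noteq> 0" and n2: "lim_at src tgt fv c v (ce v) \<noteq> 0"
      using B e e'E assms(2) i1 by auto
    have s1: "sgn (lim_at src tgt fv c v e) = sgn (c e (mid e))"
      by (rule lim_sgn[OF assms(1) _ n1]) (use assms(2) in \<open>auto simp: incident_def\<close>)
    have s2: "sgn (lim_at src tgt fv c v (ce v)) = sgn (c (ce v) (mid (ce v)))"
      by (rule lim_sgn[OF _ _ n2]) (use e' in \<open>auto simp: incident_def\<close>)
    show ?thesis unfolding kap_def using eq s1 s2 by simp
  qed
qed

definition Fp :: "'v \<Rightarrow> real" where "Fp v = - kap v * \<bar>fv v\<bar>"
definition dF :: "'e \<Rightarrow> real" where "dF e = Fp (tgt e) - Fp (src e)"

lemma dF_ce: assumes "cedge e" shows "dF e = - sgn (c e (mid e)) * (\<bar>hi e\<bar> - \<bar>lo e\<bar>)"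
proof -
  have k1: "kap (src e) = sgn (c e (mid e))" and k2: "kap (tgt e) = sgn (c e (mid e))"
    using kap_cedge[OF assms, of "src e"] kap_cedge[OF assms, of "tgt e"] by (auto simp: incident_def)
  have alg: "- s * a - (- s * b) = - s * (a - b)" for s a b :: real by (simp add: algebra_simps)
  show ?thesis unfolding dF_def Fp_def k1 k2 by (rule alg)
qed

lemma dF_noNeg: assumes "e \<in> E" "\<not> Neg e" shows "dF e < 0"
proof -
  have ce: "cedge e" using assms by (simp add: cedge_def)
  have m: "lo e < mid e" "mid e < hi e" using mid[OF assms(1)] by auto
  have pm: "mid e * c e (mid e) > 0" using noNeg[OF assms m] .
  have lh: "lo e < hi e" using edge[OF assms(1)] by simp
  consider "lo e \<ge> 0" | "hi e \<le> 0" using cedge_signs[OF ce] by blast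
  then show ?thesis
  proof cases
    case 1
    then have "c e (mid e) > 0" using pm m by (simp add: zero_less_mult_iff)
    then show ?thesis using dF_ce[OF ce] 1 lh by simp
  next
    case 2
    then have "c e (mid e) < 0" using pm m by (simp add: zero_less_mult_iff)
    then show ?thesis using dF_ce[OF ce] 2 lh by simp
  qed
qed

lemma dF_noPos: assumes "e \<in> E" "\<not> Pos e" shows "dF e > 0"
proof -
  have ce: "cedge e" using assms by (simp add: cedge_def)
  have m: "lo e < mid e" "mid e < hi e" using mid[OF assms(1)] by auto
  have pm: "mid e * c e (mid e) < 0" using noPos[OF assms m] .
  have lh: "lo e < hi e" using edge[OF assms(1)] by simp
  consider "lo e \<ge> 0" | "hi e \<le> 0" using cedge_signs[OF ce] by blast
  then show ?thesis
  proof cases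
    case 1
    then have "c e (mid e) < 0" using pm m by (simp add: mult_less_0_iff)
    then show ?thesis using dF_ce[OF ce] 1 lh by simp
  next
    case 2
    then have "c e (mid e) > 0" using pm m by (simp add: mult_less_0_iff)
    then show ?thesis using dF_ce[OF ce] 2 lh by simp
  qed
qed

end



lemma isCont_pos_nbhd:
  fixes f :: "real \<Rightarrow> real"
  assumes "isCont f x" "f x > 0"
  shows "\<exists>ep>0. \<forall>y. \<bar>y - x\<bar> < ep \<longrightarrow> f y > 0"
proof -
  have "\<forall>\<^sub>F y in at x. f y > 0" using assms by (simp add: isCont_def order_tendstoD(1))
  then obtain d where d: "d > 0" "\<And>y. y \<noteq> x \<Longrightarrow> dist y x < d \<Longrightarrow> f y > 0"
    by (auto simp: eventually_at)
  have "\<forall>y. \<bar>y - x\<bar> < d \<longrightarrow> f y > 0"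
  proof (intro allI impI)
    fix y assume "\<bar>y - x\<bar> < d"
    then show "f y > 0" using d assms(2) by (cases "y = x") (auto simp: dist_real_def)
  qed
  then show ?thesis using d(1) by blast
qed

lemma open_far: "open {y::real. a < \<bar>y - p\<bar>}"
  by (intro open_Collect_less continuous_intros)

lemma sn_cut:
  assumes "d > 0" "2 * d < R" "\<And>s. \<bar>s - p\<bar> < R \<Longrightarrow> smooth_near G s"
  shows "smooth_near (\<lambda>y. plat d p y * G y) x"
proof (cases "\<bar>x - p\<bar> < R")
  case True
  then show ?thesis using assms by (intro sn_mult sn_plat) auto
next
  case False
  show ?thesis
  proof (rule sn_local[OF sn_const open_far[of "2*d" p]])
    show "x \<in> {y. 2 * d < \<bar>y - p\<bar>}" using False assms by auto
    fix y assume "y \<in> {y. 2 * d < \<bar>y - p\<bar>}"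
    then show "0 = plat d p y * G y" using plat_0[of d y p] by auto
  qed
qed

lemma sum_single:
  assumes "finite A" "p \<in> A" "\<And>q. q \<in> A \<Longrightarrow> q \<noteq> p \<Longrightarrow> f q = 0"
  shows "(\<Sum>q\<in>A. f q) = f p"
  using assms by (simp add: sum.remove[of A p] sum.neutral)

context RG begin

definition P :: "'e \<Rightarrow> real set" where "P e = {lo e, hi e} \<union> Z e"

definition Gf :: "'e \<Rightarrow> real \<Rightarrow> real \<Rightarrow> real" where
  "Gf e p = (if p = lo e then g (Vert (src e)) else if p = hi e then g (Vert (tgt e)) else g (EPt e p))"
definition Rf :: "'e \<Rightarrow> real \<Rightarrow> real" where
  "Rf e p = (if p = lo e then r (Vert (src e)) else if p = hi e then r (Vert (tgt e)) else r (EPt e p))"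

lemma P_fin: "e \<in> E \<Longrightarrow> finite (P e)"
  using Z_finite by (simp add: P_def)

lemma P_range: "e \<in> E \<Longrightarrow> p \<in> P e \<Longrightarrow> lo e \<le> p \<and> p \<le> hi e"
  using edge[of e] by (auto simp: P_def Z_def)

lemma loc_vert: assumes "v \<in> V"
  shows "r (Vert v) > 0 \<and> (\<forall>s. \<bar>s - fv v\<bar> < r (Vert v) \<longrightarrow> smooth_near (g (Vert v)) s) \<and>
    (\<forall>e\<in>E. incident src tgt v e \<longrightarrow> (\<forall>t. lo e < t \<and> t < hi e \<and> \<bar>t - fv v\<bar> < r (Vert v) \<longrightarrow>
        sgn (g (Vert v) t) = - sgn (c e t)))"
proof -
  have "Vert v \<in> EXC" using assms exc_Vert by simp
  then have "local_form_ok E src tgt fv c (Vert v) (r (Vert v)) (g (Vert v))" using loc by blast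
  then show ?thesis by (simp add: local_form_ok_def fval_def)
qed

lemma loc_ept: assumes "e \<in> E" "z \<in> Z e"
  shows "r (EPt e z) > 0 \<and> (\<forall>s. \<bar>s - z\<bar> < r (EPt e z) \<longrightarrow> smooth_near (g (EPt e z)) s) \<and>
    (\<forall>t. lo e < t \<and> t < hi e \<and> \<bar>t - z\<bar> < r (EPt e z) \<and> t \<noteq> z \<longrightarrow> sgn (g (EPt e z) t) = - sgn (c e t))"
proof -
  have "EPt e z \<in> EXC" using assms exc_EPt by simp
  then have "local_form_ok E src tgt fv c (EPt e z) (r (EPt e z)) (g (EPt e z))" using loc by blast
  then show ?thesis by (simp add: local_form_ok_def fval_def)
qed

lemma P_props: assumes e: "e \<in> E" and p: "p \<in> P e"
  shows "Rf e p > 0" "\<And>s. \<bar>s - p\<bar> < Rf e p \<Longrightarrow> smooth_near (Gf e p) s"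
    "\<And>t. lo e < t \<Longrightarrow> t < hi e \<Longrightarrow> t \<noteq> p \<Longrightarrow> \<bar>t - p\<bar> < Rf e p \<Longrightarrow> sgn (Gf e p t) = - sgn (c e t)"
proof -
  have E1: "src e \<in> V" "tgt e \<in> V" "lo e < hi e" using edge[OF e] by auto
  have inc: "incident src tgt (src e) e" "incident src tgt (tgt e) e" by (auto simp: incident_def)
  consider "p = lo e" | "p \<noteq> lo e" "p = hi e" | "p \<noteq> lo e" "p \<noteq> hi e" "p \<in> Z e" using p by (auto simp: P_def)
  then have "Rf e p > 0 \<and> (\<forall>s. \<bar>s - p\<bar> < Rf e p \<longrightarrow> smooth_near (Gf e p) s) \<and>
    (\<forall>t. lo e < t \<and> t < hi e \<and> t \<noteq> p \<and> \<bar>t - p\<bar> < Rf e p \<longrightarrow> sgn (Gf e p t) = - sgn (c e t))"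
  proof cases
    case 1
    then show ?thesis using loc_vert[OF E1(1)] e inc by (auto simp: Gf_def Rf_def)
  next
    case 2
    then show ?thesis using loc_vert[OF E1(2)] e inc by (auto simp: Gf_def Rf_def)
  next
    case 3
    then show ?thesis using loc_ept[OF e 3(3)] by (simp add: Gf_def Rf_def)
  qed
  then show "Rf e p > 0" "\<And>s. \<bar>s - p\<bar> < Rf e p \<Longrightarrow> smooth_near (Gf e p) s"
    "\<And>t. lo e < t \<Longrightarrow> t < hi e \<Longrightarrow> t \<noteq> p \<Longrightarrow> \<bar>t - p\<bar> < Rf e p \<Longrightarrow> sgn (Gf e p t) = - sgn (c e t)"
    by auto
qed

lemma tc_isCont: "e \<in> E \<Longrightarrow> lo e < x \<Longrightarrow> x < hi e \<Longrightarrow> isCont (\<lambda>t. t * c e t) x"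
  using c_isCont by (intro continuous_intros) auto

definition BP :: "'e \<Rightarrow> real \<times> real" where
  "BP e = (SOME q. snd q > 0 \<and> lo e < fst q - snd q \<and> fst q + snd q < hi e \<and>
      (\<forall>t. \<bar>t - fst q\<bar> \<le> snd q \<longrightarrow> t * c e t > 0))"
definition BN :: "'e \<Rightarrow> real \<times> real" where
  "BN e = (SOME q. snd q > 0 \<and> lo e < fst q - snd q \<and> fst q + snd q < hi e \<and>
      (\<forall>t. \<bar>t - fst q\<bar> \<le> snd q \<longrightarrow> t * c e t < 0))"

lemma BP: assumes "e \<in> E" "Pos e"
  shows "snd (BP e) > 0 \<and> lo e < fst (BP e) - snd (BP e) \<and> fst (BP e) + snd (BP e) < hi e \<and>
      (\<forall>t. \<bar>t - fst (BP e)\<bar> \<le> snd (BP e) \<longrightarrow> t * c e t > 0)"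
proof -
  obtain t0 where t0: "lo e < t0" "t0 < hi e" "t0 * c e t0 > 0" using assms(2) by (auto simp: Pos_def)
  obtain ep where ep: "ep > 0" "\<And>y. \<bar>y - t0\<bar> < ep \<Longrightarrow> y * c e y > 0"
    using isCont_pos_nbhd[OF tc_isCont[OF assms(1) t0(1,2)] t0(3)] by blast
  define h where "h = min ep (min (t0 - lo e) (hi e - t0)) / 2"
  have hh: "h > 0" "h < ep" "h < t0 - lo e" "h < hi e - t0" using t0 ep by (auto simp: h_def)
  have "snd (t0, h) > 0 \<and> lo e < fst (t0, h) - snd (t0, h) \<and> fst (t0, h) + snd (t0, h) < hi e \<and>
      (\<forall>t. \<bar>t - fst (t0, h)\<bar> \<le> snd (t0, h) \<longrightarrow> t * c e t > 0)"
    using hh ep by auto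
  then show ?thesis unfolding BP_def by (rule someI)
qed

lemma BN: assumes "e \<in> E" "Neg e"
  shows "snd (BN e) > 0 \<and> lo e < fst (BN e) - snd (BN e) \<and> fst (BN e) + snd (BN e) < hi e \<and>
      (\<forall>t. \<bar>t - fst (BN e)\<bar> \<le> snd (BN e) \<longrightarrow> t * c e t < 0)"
proof -
  obtain t0 where t0: "lo e < t0" "t0 < hi e" "t0 * c e t0 < 0" using assms(2) by (auto simp: Neg_def)
  have "isCont (\<lambda>t. - (t * c e t)) t0" using tc_isCont[OF assms(1) t0(1,2)] by (rule isCont_minus)
  then obtain ep where ep: "ep > 0" "\<And>y. \<bar>y - t0\<bar> < ep \<Longrightarrow> - (y * c e y) > 0"
    using isCont_pos_nbhd[where f="\<lambda>t. - (t * c e t)" and x=t0] t0(3) by auto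
  define h where "h = min ep (min (t0 - lo e) (hi e - t0)) / 2"
  have hh: "h > 0" "h < ep" "h < t0 - lo e" "h < hi e - t0" using t0 ep by (auto simp: h_def)
  have "snd (t0, h) > 0 \<and> lo e < fst (t0, h) - snd (t0, h) \<and> fst (t0, h) + snd (t0, h) < hi e \<and>
      (\<forall>t. \<bar>t - fst (t0, h)\<bar> \<le> snd (t0, h) \<longrightarrow> t * c e t < 0)"
    using hh ep by force
  then show ?thesis unfolding BN_def by (rule someI)
qed

definition rhoP :: "'e \<Rightarrow> real \<Rightarrow> real" where
  "rhoP e = (if Pos e then bump (fst (BP e)) (snd (BP e)) else (\<lambda>t. 0))"
definition rhoN :: "'e \<Rightarrow> real \<Rightarrow> real" where
  "rhoN e = (if Neg e then bump (fst (BN e)) (snd (BN e)) else (\<lambda>t. 0))"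

lemma rho_basic: "rhoP e t \<ge> 0" "rhoN e t \<ge> 0" "smooth_near (rhoP e) x" "smooth_near (rhoN e) x"
  by (auto simp: rhoP_def rhoN_def bump_ge0 sn_bump sn_const)

lemma BP_far: assumes "e \<in> E" "Pos e" "p \<in> P e" shows "snd (BP e) < \<bar>fst (BP e) - p\<bar>"
proof -
  note B = BP[OF assms(1,2)]
  show ?thesis
  proof (rule ccontr)
    assume "\<not> ?thesis"
    then have "\<bar>p - fst (BP e)\<bar> \<le> snd (BP e)" by linarith
    then have pc: "p * c e p > 0" using B by blast
    have "p \<noteq> lo e" "p \<noteq> hi e" using \<open>\<bar>p - fst (BP e)\<bar> \<le> snd (BP e)\<close> B by auto
    then have "p \<in> Z e" using assms(3) by (auto simp: P_def)
    then show False using pc by (auto simp: Z_def)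
  qed
qed

lemma BN_far: assumes "e \<in> E" "Neg e" "p \<in> P e" shows "snd (BN e) < \<bar>fst (BN e) - p\<bar>"
proof -
  note B = BN[OF assms(1,2)]
  show ?thesis
  proof (rule ccontr)
    assume "\<not> ?thesis"
    then have "\<bar>p - fst (BN e)\<bar> \<le> snd (BN e)" by linarith
    then have pc: "p * c e p < 0" using B by blast
    have "p \<noteq> lo e" "p \<noteq> hi e" using \<open>\<bar>p - fst (BN e)\<bar> \<le> snd (BN e)\<close> B by auto
    then have "p \<in> Z e" using assms(3) by (auto simp: P_def)
    then show False using pc by (auto simp: Z_def)
  qed
qed

definition Good :: "'e \<Rightarrow> real \<Rightarrow> bool" where
  "Good e d \<longleftrightarrow> (\<forall>pq\<in>P e \<times> P e. fst pq \<noteq> snd pq \<longrightarrow> 4 * d < \<bar>fst pq - snd pq\<bar>) \<and>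
     (\<forall>p\<in>P e. 2 * d < Rf e p) \<and>
     (\<forall>p\<in>P e. Pos e \<longrightarrow> snd (BP e) + 2 * d < \<bar>fst (BP e) - p\<bar>) \<and>
     (\<forall>p\<in>P e. Neg e \<longrightarrow> snd (BN e) + 2 * d < \<bar>fst (BN e) - p\<bar>)"

lemma Good_ex: assumes e: "e \<in> E" shows "\<exists>d0>0. \<forall>d. 0 < d \<and> d \<le> d0 \<longrightarrow> Good e d"
proof -
  have f: "finite (P e)" using P_fin[OF e] .
  obtain d1 where d1: "d1 > 0" "\<forall>d. 0 < d \<and> d \<le> d1 \<longrightarrow> (\<forall>pq\<in>P e \<times> P e. fst pq \<noteq> snd pq \<longrightarrow> 4 * d < \<bar>fst pq - snd pq\<bar>)"
  proof -
    have "\<exists>d0>0. \<forall>d. 0 < d \<and> d \<le> d0 \<longrightarrow> (\<forall>pq\<in>P e \<times> P e. fst pq \<noteq> snd pq \<longrightarrow> 4 * d < \<bar>fst pq - snd pq\<bar>)"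
    proof (rule finite_small)
      fix pq assume "pq \<in> P e \<times> P e"
      show "\<exists>d0>0. \<forall>d. 0 < d \<and> d \<le> d0 \<longrightarrow> (fst pq \<noteq> snd pq \<longrightarrow> 4 * d < \<bar>fst pq - snd pq\<bar>)"
      proof (cases "fst pq = snd pq")
        case True then show ?thesis by (intro exI[of _ 1]) auto
      next
        case False then show ?thesis by (intro exI[of _ "\<bar>fst pq - snd pq\<bar> / 8"]) auto
      qed
    qed (use f in auto)
    then show ?thesis using that by blast
  qed
  obtain d2 where d2: "d2 > 0" "\<forall>d. 0 < d \<and> d \<le> d2 \<longrightarrow> (\<forall>p\<in>P e. 2 * d < Rf e p \<and>
        (Pos e \<longrightarrow> snd (BP e) + 2 * d < \<bar>fst (BP e) - p\<bar>) \<and> (Neg e \<longrightarrow> snd (BN e) + 2 * d < \<bar>fst (BN e) - p\<bar>))"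
  proof -
    have "\<exists>d0>0. \<forall>d. 0 < d \<and> d \<le> d0 \<longrightarrow> (\<forall>p\<in>P e. 2 * d < Rf e p \<and>
        (Pos e \<longrightarrow> snd (BP e) + 2 * d < \<bar>fst (BP e) - p\<bar>) \<and> (Neg e \<longrightarrow> snd (BN e) + 2 * d < \<bar>fst (BN e) - p\<bar>))"
    proof (rule finite_small[OF f])
      fix p assume p: "p \<in> P e"
      define a where "a = Rf e p / 4"
      define b where "b = (if Pos e then (\<bar>fst (BP e) - p\<bar> - snd (BP e)) / 4 else 1)"
      define c' where "c' = (if Neg e then (\<bar>fst (BN e) - p\<bar> - snd (BN e)) / 4 else 1)"
      have "a > 0" using P_props(1)[OF e p] by (simp add: a_def)
      moreover have "b > 0" using BP_far[OF e _ p] by (simp add: b_def)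
      moreover have "c' > 0" using BN_far[OF e _ p] by (simp add: c'_def)
      ultimately show "\<exists>d0>0. \<forall>d. 0 < d \<and> d \<le> d0 \<longrightarrow> 2 * d < Rf e p \<and>
        (Pos e \<longrightarrow> snd (BP e) + 2 * d < \<bar>fst (BP e) - p\<bar>) \<and> (Neg e \<longrightarrow> snd (BN e) + 2 * d < \<bar>fst (BN e) - p\<bar>)"
        by (intro exI[of _ "min a (min b c')"]) (auto simp: a_def b_def c'_def)
    qed
    then show ?thesis using that by blast
  qed
  show ?thesis using d1 d2 by (intro exI[of _ "min d1 d2"]) (auto simp: Good_def)
qed

definition dd :: real where "dd = (SOME d. d > 0 \<and> (\<forall>e\<in>E. Good e d))"

lemma dd: "dd > 0" "e \<in> E \<Longrightarrow> Good e dd"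
proof -
  have "\<exists>d0>0. \<forall>d. 0 < d \<and> d \<le> d0 \<longrightarrow> (\<forall>e\<in>E. Good e d)"
    using finite_small[OF finE, of Good] Good_ex by blast
  then have "\<exists>d. d > 0 \<and> (\<forall>e\<in>E. Good e d)" by auto
  then have "dd > 0 \<and> (\<forall>e\<in>E. Good e dd)" unfolding dd_def by (rule someI_ex)
  then show "dd > 0" "e \<in> E \<Longrightarrow> Good e dd" by auto
qed

end



lemma sn_minus: "smooth_near f x \<Longrightarrow> smooth_near (\<lambda>y. - f y) x"
proof -
  assume "smooth_near f x"
  then have "smooth_near (\<lambda>y. (-1) * f y) x" by (intro sn_mult sn_const)
  then show ?thesis by simp
qed

lemma sn_diff: "smooth_near f x \<Longrightarrow> smooth_near g x \<Longrightarrow> smooth_near (\<lambda>y. f y - g y) x"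
proof -
  assume "smooth_near f x" "smooth_near g x"
  then have "smooth_near (\<lambda>y. f y + - g y) x" by (intro sn_add sn_minus)
  then show ?thesis by simp
qed

context RG begin

definition chi :: "'e \<Rightarrow> real \<Rightarrow> real" where "chi e t = (\<Sum>p\<in>P e. plat dd p t)"

definition gl :: "'e \<Rightarrow> real \<Rightarrow> real \<Rightarrow> real \<Rightarrow> real" where
  "gl e l m t = (\<Sum>p\<in>P e. plat dd p t * Gf e p t) + (1 - chi e t + l * rhoP e t + m * rhoN e t) * (- c e t)"

lemma G1: "e \<in> E \<Longrightarrow> p \<in> P e \<Longrightarrow> q \<in> P e \<Longrightarrow> p \<noteq> q \<Longrightarrow> 4 * dd < \<bar>p - q\<bar>"
  using dd(2)[of e] by (auto simp: Good_def)
lemma G2: "e \<in> E \<Longrightarrow> p \<in> P e \<Longrightarrow> 2 * dd < Rf e p"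
  using dd(2)[of e] by (auto simp: Good_def)
lemma G3: "e \<in> E \<Longrightarrow> p \<in> P e \<Longrightarrow> Pos e \<Longrightarrow> snd (BP e) + 2 * dd < \<bar>fst (BP e) - p\<bar>"
  using dd(2)[of e] by (auto simp: Good_def)
lemma G4: "e \<in> E \<Longrightarrow> p \<in> P e \<Longrightarrow> Neg e \<Longrightarrow> snd (BN e) + 2 * dd < \<bar>fst (BN e) - p\<bar>"
  using dd(2)[of e] by (auto simp: Good_def)

lemma plat_other: assumes "e \<in> E" "p \<in> P e" "q \<in> P e" "q \<noteq> p" "\<bar>t - p\<bar> < 2 * dd"
  shows "plat dd q t = 0"
proof -
  have "4 * dd < \<bar>p - q\<bar>" using G1[OF assms(1,2,3)] assms(4) by auto
  then have "2 * dd \<le> \<bar>t - q\<bar>" using assms(5) by linarith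
  then show ?thesis by (rule plat_0)
qed

lemma plat_nz: "plat dd p t \<noteq> 0 \<Longrightarrow> \<bar>t - p\<bar> < 2 * dd"
  using plat_0[of dd t p] by linarith

lemma rho_zero_near: assumes "e \<in> E" "p \<in> P e" "\<bar>t - p\<bar> \<le> dd"
  shows "rhoP e t = 0" "rhoN e t = 0"
proof -
  show "rhoP e t = 0"
  proof (cases "Pos e")
    case True
    have "snd (BP e) \<le> \<bar>t - fst (BP e)\<bar>" using G3[OF assms(1,2) True] assms(3) dd(1) by linarith
    then show ?thesis using True by (simp add: rhoP_def bump_0)
  qed (simp add: rhoP_def)
  show "rhoN e t = 0"
  proof (cases "Neg e")
    case True
    have "snd (BN e) \<le> \<bar>t - fst (BN e)\<bar>" using G4[OF assms(1,2) True] assms(3) dd(1) by linarith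
    then show ?thesis using True by (simp add: rhoN_def bump_0)
  qed (simp add: rhoN_def)
qed

lemma sum_plat: assumes "e \<in> E" "p \<in> P e" "\<bar>t - p\<bar> < 2 * dd"
  shows "(\<Sum>q\<in>P e. plat dd q t * H q) = plat dd p t * H p"
  by (rule sum_single[OF P_fin[OF assms(1)] assms(2)]) (use plat_other[OF assms(1,2) _ _ assms(3)] in auto)

lemma chi_single: assumes "e \<in> E" "p \<in> P e" "\<bar>t - p\<bar> < 2 * dd"
  shows "chi e t = plat dd p t"
  using sum_plat[OF assms, of "\<lambda>q. 1"] by (simp add: chi_def)

lemma gl_at: assumes "e \<in> E" "p \<in> P e" "\<bar>t - p\<bar> \<le> dd"
  shows "gl e l m t = Gf e p t"
proof -
  have lt: "\<bar>t - p\<bar> < 2 * dd" using assms(3) dd(1) by linarith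
  have p1: "plat dd p t = 1" using plat_1[OF dd(1) assms(3)] .
  show ?thesis unfolding gl_def sum_plat[OF assms(1,2) lt] chi_single[OF assms(1,2) lt] p1
      rho_zero_near[OF assms] by simp
qed

lemma gl_nz: assumes e: "e \<in> E" and t: "lo e < t" "t < hi e" "t \<notin> Z e" and lm: "l \<ge> 0" "m \<ge> 0"
  shows "gl e l m t \<noteq> 0"
proof -
  have c0: "c e t \<noteq> 0" using t by (auto simp: Z_def)
  have tP: "t \<notin> P e" using t by (auto simp: P_def)
  have rr: "l * rhoP e t \<ge> 0" "m * rhoN e t \<ge> 0" using lm rho_basic by auto
  show ?thesis
  proof (cases "\<exists>p\<in>P e. plat dd p t \<noteq> 0")
    case True
    then obtain p where p: "p \<in> P e" "plat dd p t \<noteq> 0" by blast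
    have lt: "\<bar>t - p\<bar> < 2 * dd" using plat_nz[OF p(2)] .
    have pl: "plat dd p t > 0" "plat dd p t \<le> 1" using plat_ge0[OF dd(1)] plat_le1[OF dd(1)] p(2)
      by (auto simp: order_le_less)
    have sg: "sgn (Gf e p t) = - sgn (c e t)"
      using P_props(3)[OF e p(1) t(1,2)] tP p(1) lt G2[OF e p(1)] by auto
    have W: "1 - plat dd p t + l * rhoP e t + m * rhoN e t \<ge> 0" using pl rr by linarith
    have eq: "gl e l m t = plat dd p t * Gf e p t + (1 - plat dd p t + l * rhoP e t + m * rhoN e t) * (- c e t)"
      unfolding gl_def sum_plat[OF e p(1) lt] chi_single[OF e p(1) lt] ..
    show ?thesis
    proof (cases "c e t > 0")
      case True
      then have "Gf e p t < 0" using sg by (auto simp: sgn_if split: if_splits)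
      then have "plat dd p t * Gf e p t < 0" using pl by (simp add: mult_pos_neg)
      moreover have "(1 - plat dd p t + l * rhoP e t + m * rhoN e t) * (- c e t) \<le> 0"
        using W True by (simp add: mult_nonneg_nonpos)
      ultimately show ?thesis using eq by linarith
    next
      case False
      then have cn: "c e t < 0" using c0 by linarith
      then have "Gf e p t > 0" using sg by (auto simp: sgn_if split: if_splits)
      then have "plat dd p t * Gf e p t > 0" using pl by simp
      moreover have "(1 - plat dd p t + l * rhoP e t + m * rhoN e t) * (- c e t) \<ge> 0"
        using W cn by (simp add: mult_nonneg_nonpos)
      ultimately show ?thesis using eq by linarith
    qed
  next
    case False
    then have z: "\<And>p. p \<in> P e \<Longrightarrow> plat dd p t = 0" by blast
    have "gl e l m t = (1 + l * rhoP e t + m * rhoN e t) * (- c e t)"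
      unfolding gl_def chi_def using z by simp
    moreover have "1 + l * rhoP e t + m * rhoN e t > 0" using rr by linarith
    ultimately show ?thesis using c0 by simp
  qed
qed

lemma gl_sn: assumes e: "e \<in> E" and t: "lo e < t" "t < hi e"
  shows "smooth_near (gl e l m) t"
proof -
  have s1: "smooth_near (\<lambda>y. \<Sum>p\<in>P e. plat dd p y * Gf e p y) t"
    by (rule sn_sum[OF P_fin[OF e]]) (rule sn_cut[OF dd(1) G2[OF e] P_props(2)[OF e]], auto)
  have s2: "smooth_near (\<lambda>y. \<Sum>p\<in>P e. plat dd p y) t"
    by (rule sn_sum[OF P_fin[OF e]]) (rule sn_plat[OF dd(1)])
  have s3: "smooth_near (\<lambda>y. 1 - (\<Sum>p\<in>P e. plat dd p y) + l * rhoP e y + m * rhoN e y) t"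
    by (intro sn_add sn_mult sn_diff[OF sn_const s2] sn_const rho_basic)
  have "smooth_near (\<lambda>t. (\<Sum>p\<in>P e. plat dd p t * Gf e p t) +
      (1 - (\<Sum>p\<in>P e. plat dd p t) + l * rhoP e t + m * rhoN e t) * (- c e t)) t"
    by (intro sn_add[OF s1] sn_mult[OF s3] sn_minus c_sn[OF e t])
  then show ?thesis by (simp add: gl_def[abs_def] chi_def)
qed

lemma gl_cont: assumes e: "e \<in> E" shows "continuous_on {lo e..hi e} (gl e l m)"
proof -
  have lh: "lo e < hi e" using edge[OF e] by simp
  have endp: "continuous (at x within {lo e..hi e}) (gl e l m)" if x: "x \<in> P e" "x = lo e \<or> x = hi e" for x
  proof -
    have "isCont (Gf e x) x" using P_props(2)[OF e x(1), of x] P_props(1)[OF e x(1)] sn_isCont by auto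
    then have "continuous (at x within {lo e..hi e}) (Gf e x)" by (rule continuous_at_imp_continuous_within)
    then show ?thesis
    proof (rule continuous_transform_within[OF _ dd(1)])
      show "x \<in> {lo e..hi e}" using x lh by auto
      fix x' assume "x' \<in> {lo e..hi e}" "dist x' x < dd"
      then show "Gf e x x' = gl e l m x'" using gl_at[OF e x(1), of x'] by (simp add: dist_real_def)
    qed
  qed
  show ?thesis
  proof (rule continuous_on_eq_continuous_within[THEN iffD2], rule ballI)
    fix x assume x: "x \<in> {lo e..hi e}"
    consider "x = lo e" | "x = hi e" | "lo e < x" "x < hi e" using x by force
    then show "continuous (at x within {lo e..hi e}) (gl e l m)"
    proof cases
      case 1 then show ?thesis using endp by (auto simp: P_def)
    next
      case 2 then show ?thesis using endp by (auto simp: P_def)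
    next
      case 3
      then show ?thesis using gl_sn[OF e 3] sn_isCont continuous_at_imp_continuous_within by blast
    qed
  qed
qed

lemma gl_lin: "gl e l m t = gl e 0 0 t + l * (rhoP e t * (- c e t)) + m * (rhoN e t * (- c e t))"
  by (simp add: gl_def algebra_simps)

definition KP :: "'e \<Rightarrow> real" where "KP e = integral {lo e..hi e} (\<lambda>t. t * (rhoP e t * (- c e t)))"
definition KN :: "'e \<Rightarrow> real" where "KN e = integral {lo e..hi e} (\<lambda>t. t * (rhoN e t * (- c e t)))"
definition A :: "'e \<Rightarrow> real" where "A e = integral {lo e..hi e} (\<lambda>t. t * gl e 0 0 t)"

lemma contP: "e \<in> E \<Longrightarrow> continuous_on {lo e..hi e} (\<lambda>t. t * (rhoP e t * (- c e t)))"
proof -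
  assume e: "e \<in> E"
  have "continuous_on {lo e..hi e} (\<lambda>t. t * (gl e 1 0 t - gl e 0 0 t))"
    by (intro continuous_intros gl_cont[OF e])
  moreover have "(\<lambda>t. t * (gl e 1 0 t - gl e 0 0 t)) = (\<lambda>t. t * (rhoP e t * (- c e t)))"
    using gl_lin[of e 1 0] by auto
  ultimately show ?thesis by metis
qed

lemma contN: "e \<in> E \<Longrightarrow> continuous_on {lo e..hi e} (\<lambda>t. t * (rhoN e t * (- c e t)))"
proof -
  assume e: "e \<in> E"
  have "continuous_on {lo e..hi e} (\<lambda>t. t * (gl e 0 1 t - gl e 0 0 t))"
    by (intro continuous_intros gl_cont[OF e])
  moreover have "(\<lambda>t. t * (gl e 0 1 t - gl e 0 0 t)) = (\<lambda>t. t * (rhoN e t * (- c e t)))"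
    using gl_lin[of e 0 1] by auto
  ultimately show ?thesis by metis
qed

lemma Iv_lin: assumes e: "e \<in> E"
  shows "integral {lo e..hi e} (\<lambda>t. t * gl e l m t) = A e + l * KP e + m * KN e"
proof -
  have i0: "(\<lambda>t. t * gl e 0 0 t) integrable_on {lo e..hi e}"
    by (intro integrable_continuous_real continuous_intros gl_cont[OF e])
  have i1: "(\<lambda>t. t * (rhoP e t * (- c e t))) integrable_on {lo e..hi e}"
    by (intro integrable_continuous_real contP[OF e])
  have i2: "(\<lambda>t. t * (rhoN e t * (- c e t))) integrable_on {lo e..hi e}"
    by (intro integrable_continuous_real contN[OF e])
  have i1': "(\<lambda>t. l * (t * (rhoP e t * (- c e t)))) integrable_on {lo e..hi e}"
    by (intro integrable_continuous_real continuous_on_mult_left contP[OF e])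
  have i2': "(\<lambda>t. m * (t * (rhoN e t * (- c e t)))) integrable_on {lo e..hi e}"
    by (intro integrable_continuous_real continuous_on_mult_left contN[OF e])
  have "(\<lambda>t. t * gl e l m t) = (\<lambda>t. (t * gl e 0 0 t + l * (t * (rhoP e t * (- c e t)))) + m * (t * (rhoN e t * (- c e t))))"
    by (rule ext, subst gl_lin) (simp add: algebra_simps)
  then have "integral {lo e..hi e} (\<lambda>t. t * gl e l m t) =
      integral {lo e..hi e} (\<lambda>t. (t * gl e 0 0 t + l * (t * (rhoP e t * (- c e t)))) + m * (t * (rhoN e t * (- c e t))))"
    by simp
  also have "\<dots> = integral {lo e..hi e} (\<lambda>t. t * gl e 0 0 t + l * (t * (rhoP e t * (- c e t)))) +
      integral {lo e..hi e} (\<lambda>t. m * (t * (rhoN e t * (- c e t))))"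
    by (intro integral_add integrable_add i0 i1' i2')
  also have "\<dots> = A e + l * KP e + m * KN e"
    by (subst integral_add[OF i0 i1']) (simp add: A_def KP_def KN_def)
  finally show ?thesis .
qed

lemma KP_neg: assumes e: "e \<in> E" and P: "Pos e" shows "KP e < 0"
proof -
  note B = BP[OF e P]
  let ?f = "\<lambda>t. t * (rhoP e t * (- c e t))"
  have f_eq: "?f t = - (bump (fst (BP e)) (snd (BP e)) t * (t * c e t))" for t
    using P by (simp add: rhoP_def algebra_simps)
  show ?thesis unfolding KP_def
  proof (rule integral_neg_pt[of _ _ _ "fst (BP e)"])
    show "continuous_on {lo e..hi e} ?f" using contP[OF e] .
    show "lo e < hi e" using edge[OF e] by simp
    show "fst (BP e) \<in> {lo e..hi e}" using B by auto
    show "?f (fst (BP e)) < 0" unfolding f_eq using B bump_pos[of "fst (BP e)" "fst (BP e)" "snd (BP e)"]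
      by (simp add: mult_pos_pos)
    fix t assume "t \<in> {lo e..hi e}"
    show "?f t \<le> 0"
    proof (cases "\<bar>t - fst (BP e)\<bar> < snd (BP e)")
      case True
      then have "t * c e t > 0" using B by auto
      then show ?thesis unfolding f_eq using bump_ge0 by simp
    next
      case False
      then show ?thesis unfolding f_eq by (simp add: bump_0)
    qed
  qed
qed

lemma KN_pos: assumes e: "e \<in> E" and N: "Neg e" shows "KN e > 0"
proof -
  note B = BN[OF e N]
  let ?f = "\<lambda>t. t * (rhoN e t * (- c e t))"
  have f_eq: "?f t = - (bump (fst (BN e)) (snd (BN e)) t * (t * c e t))" for t
    using N by (simp add: rhoN_def algebra_simps)
  show ?thesis unfolding KN_def
  proof (rule integral_pos_pt[of _ _ _ "fst (BN e)"])
    show "continuous_on {lo e..hi e} ?f" using contN[OF e] .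
    show "lo e < hi e" using edge[OF e] by simp
    show "fst (BN e) \<in> {lo e..hi e}" using B by auto
    show "?f (fst (BN e)) > 0" unfolding f_eq using B bump_pos[of "fst (BN e)" "fst (BN e)" "snd (BN e)"]
      by (simp add: mult_pos_neg)
    fix t assume "t \<in> {lo e..hi e}"
    show "?f t \<ge> 0"
    proof (cases "\<bar>t - fst (BN e)\<bar> < snd (BN e)")
      case True
      then have "t * c e t < 0" using B by auto
      then show ?thesis unfolding f_eq using bump_ge0 by (simp add: mult_nonneg_nonpos)
    next
      case False
      then show ?thesis unfolding f_eq by (simp add: bump_0)
    qed
  qed
qed

end



lemma walk_telescope:
  fixes F :: "'v \<Rightarrow> real"
  assumes "closed_walk E src tgt w"
  shows "(\<Sum>s\<leftarrow>w. F (wend src tgt s) - F (wstart src tgt s)) = 0"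
proof -
  have ne: "w \<noteq> []" and ch: "\<And>i. Suc i < length w \<Longrightarrow> wend src tgt (w ! i) = wstart src tgt (w ! Suc i)"
    and cl: "wend src tgt (last w) = wstart src tgt (hd w)"
    using assms by (auto simp: closed_walk_def)
  obtain k where k: "length w = Suc k" using ne by (cases w) auto
  have "(\<Sum>s\<leftarrow>w. F (wend src tgt s) - F (wstart src tgt s)) =
      (\<Sum>i<Suc k. F (wend src tgt (w ! i))) - (\<Sum>i<Suc k. F (wstart src tgt (w ! i)))"
    by (simp add: sum_list_sum_nth k atLeast0LessThan sum_subtractf)
  also have "(\<Sum>i<Suc k. F (wstart src tgt (w ! i))) = F (wstart src tgt (w ! 0)) + (\<Sum>i<k. F (wstart src tgt (w ! Suc i)))"
    by (rule sum.lessThan_Suc_shift)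
  also have "(\<Sum>i<k. F (wstart src tgt (w ! Suc i))) = (\<Sum>i<k. F (wend src tgt (w ! i)))"
    using ch k by (intro sum.cong) auto
  also have "wstart src tgt (w ! 0) = wend src tgt (w ! k)"
    using cl ne k by (simp add: hd_conv_nth last_conv_nth)
  finally show ?thesis by simp
qed

context RG begin

definition Lam :: real where "Lam = 1 + (\<Sum>e\<in>E. \<bar>A e\<bar> / \<bar>dF e\<bar>)"
definition Dt :: "'e \<Rightarrow> real" where "Dt e = Lam * dF e - A e"
definition lam :: "'e \<Rightarrow> real" where "lam e = (if Dt e \<le> 0 \<and> Pos e then Dt e / KP e else 0)"
definition mu :: "'e \<Rightarrow> real" where "mu e = (if Dt e \<le> 0 \<and> Pos e then 0 else Dt e / KN e)"

lemma big: assumes "e \<in> E" "dF e \<noteq> 0" shows "\<bar>A e\<bar> < Lam * \<bar>dF e\<bar>"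
proof -
  have "\<bar>A e\<bar> / \<bar>dF e\<bar> \<le> (\<Sum>e\<in>E. \<bar>A e\<bar> / \<bar>dF e\<bar>)"
    using assms(1) finE by (intro member_le_sum) auto
  then have "1 + \<bar>A e\<bar> / \<bar>dF e\<bar> \<le> Lam" by (simp add: Lam_def)
  then have "(1 + \<bar>A e\<bar> / \<bar>dF e\<bar>) * \<bar>dF e\<bar> \<le> Lam * \<bar>dF e\<bar>" by (rule mult_right_mono) simp
  moreover have "(1 + \<bar>A e\<bar> / \<bar>dF e\<bar>) * \<bar>dF e\<bar> = \<bar>dF e\<bar> + \<bar>A e\<bar>" using assms(2) by (simp add: field_simps)
  moreover have "\<bar>dF e\<bar> > 0" using assms(2) by simp
  ultimately show ?thesis by linarith
qed

lemma Lam_pos: "Lam > 0"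
proof -
  have "(\<Sum>e\<in>E. \<bar>A e\<bar> / \<bar>dF e\<bar>) \<ge> 0" by (intro sum_nonneg) auto
  then show ?thesis by (simp add: Lam_def)
qed

lemma lm_ok: assumes e: "e \<in> E"
  shows "lam e \<ge> 0" "mu e \<ge> 0" "A e + lam e * KP e + mu e * KN e = Lam * dF e"
proof -
  have "lam e \<ge> 0 \<and> mu e \<ge> 0 \<and> A e + lam e * KP e + mu e * KN e = Lam * dF e"
  proof (cases "Dt e \<le> 0 \<and> Pos e")
    case True
    have kp: "KP e < 0" using KP_neg[OF e] True by simp
    have "lam e = Dt e / KP e" "mu e = 0" using True by (auto simp: lam_def mu_def)
    moreover have "Dt e / KP e \<ge> 0" using True kp by (simp add: divide_nonpos_neg)
    ultimately show ?thesis using kp by (simp add: Dt_def)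
  next
    case False
    have ND: "Neg e \<and> Dt e \<ge> 0"
    proof (cases "Pos e")
      case True
      then have D: "Dt e > 0" using False by simp
      have "Neg e"
      proof (rule ccontr)
        assume "\<not> Neg e"
        then have "dF e < 0" using dF_noNeg[OF e] by simp
        then have "\<bar>A e\<bar> < Lam * - dF e" using big[OF e] by simp
        then show False using D by (simp add: Dt_def)
      qed
      then show ?thesis using D by simp
    next
      case False
      then have "Neg e" using PosNeg[OF e] by simp
      moreover have "dF e > 0" using dF_noPos[OF e False] .
      moreover have "\<bar>A e\<bar> < Lam * dF e" using big[OF e] calculation by simp
      ultimately show ?thesis by (simp add: Dt_def)
    qed
    have kn: "KN e > 0" using KN_pos[OF e] ND by simp
    have "lam e = 0" "mu e = Dt e / KN e" using False by (auto simp: lam_def mu_def)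
    then show ?thesis using kn ND by (simp add: Dt_def)
  qed
  then show "lam e \<ge> 0" "mu e \<ge> 0" "A e + lam e * KP e + mu e * KN e = Lam * dF e" by auto
qed

lemma vert_agree: assumes "e \<in> E" "incident src tgt v e" "\<bar>t - fv v\<bar> \<le> dd"
  shows "gl e l m t = g (Vert v) t"
proof -
  have lh: "lo e < hi e" using edge[OF assms(1)] by simp
  show ?thesis
  proof (cases "src e = v")
    case True
    then show ?thesis using gl_at[OF assms(1), of "lo e" t l m] assms(3) by (simp add: P_def Gf_def)
  next
    case False
    then have "tgt e = v" using assms(2) by (simp add: incident_def)
    then show ?thesis using gl_at[OF assms(1), of "hi e" t l m] assms(3) lh by (simp add: P_def Gf_def)
  qed
qed

lemma main:
  "\<exists>ge. one_form V E src tgt fv ge \<and>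
           (\<forall>e\<in>E. \<forall>t. fv (src e) < t \<and> t < fv (tgt e) \<and>
              EPt e t \<notin> exceptional V E src tgt fv c \<longrightarrow> ge e t \<noteq> 0) \<and>
           (\<forall>p\<in>exceptional V E src tgt fv c. coincides_near E src tgt fv ge p (r p) (g p)) \<and>
           exact_form E src tgt fv (\<lambda>e t. t * ge e t)"
proof (intro exI[of _ "\<lambda>e. gl e (lam e) (mu e)"] conjI)
  show "one_form V E src tgt fv (\<lambda>e. gl e (lam e) (mu e))"
    unfolding one_form_def
  proof (intro conjI ballI allI impI)
    fix e t assume "e \<in> E" "lo e < t \<and> t < hi e"
    then show "smooth_near (gl e (lam e) (mu e)) t" using gl_sn by auto
  next
    fix v assume v: "v \<in> V"
    show "\<exists>h \<delta>. 0 < \<delta> \<and> smooth_near h (fv v) \<and> (\<forall>e\<in>E. incident src tgt v e \<longrightarrow>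
        (\<forall>t. lo e \<le> t \<and> t \<le> hi e \<and> \<bar>t - fv v\<bar> < \<delta> \<longrightarrow> gl e (lam e) (mu e) t = h t))"
      using loc_vert[OF v] dd(1) vert_agree
      by (intro exI[of _ "g (Vert v)"] exI[of _ dd]) auto
  qed
  show "\<forall>e\<in>E. \<forall>t. lo e < t \<and> t < hi e \<and> EPt e t \<notin> EXC \<longrightarrow> gl e (lam e) (mu e) t \<noteq> 0"
    using gl_nz lm_ok exc_EPt by auto
  show "\<forall>p\<in>EXC. coincides_near E src tgt fv (\<lambda>e. gl e (lam e) (mu e)) p (r p) (g p)"
  proof
    fix p assume p: "p \<in> EXC"
    show "coincides_near E src tgt fv (\<lambda>e. gl e (lam e) (mu e)) p (r p) (g p)"
    proof (cases p)
      case (Vert v)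
      then have v: "v \<in> V" using p exc_Vert by simp
      have r0: "r (Vert v) > 0" using loc_vert[OF v] by simp
      show ?thesis unfolding coincides_near_def Vert
        using r0 dd(1) vert_agree
        by (intro exI[of _ "min dd (r (Vert v))"]) auto
    next
      case (EPt e0 t0)
      then have e0: "e0 \<in> E" "t0 \<in> Z e0" using p exc_EPt by auto
      have r0: "r (EPt e0 t0) > 0" using loc_ept[OF e0] by simp
      have tP: "t0 \<in> P e0" "t0 \<noteq> lo e0" "t0 \<noteq> hi e0" using e0 by (auto simp: P_def Z_def)
      have "\<forall>t. lo e0 \<le> t \<and> t \<le> hi e0 \<and> \<bar>t - t0\<bar> < min dd (r (EPt e0 t0)) \<longrightarrow>
          gl e0 (lam e0) (mu e0) t = g (EPt e0 t0) t"
        using gl_at[OF e0(1) tP(1)] tP by (auto simp: Gf_def)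
      then show ?thesis unfolding coincides_near_def EPt
        using r0 dd(1) by (intro exI[of _ "min dd (r (EPt e0 t0))"]) auto
    qed
  qed
  show "exact_form E src tgt fv (\<lambda>e t. t * gl e (lam e) (mu e) t)"
    unfolding exact_form_def
  proof (intro allI impI)
    fix w assume w: "closed_walk E src tgt w"
    have sE: "fst s \<in> E" if "s \<in> set w" for s using w that by (auto simp: closed_walk_def)
    have "cycle_integral src tgt fv (\<lambda>e t. t * gl e (lam e) (mu e) t) w =
        (\<Sum>s\<leftarrow>w. Lam * (Fp (wend src tgt s) - Fp (wstart src tgt s)))"
      unfolding cycle_integral_def
    proof (rule arg_cong[where f=sum_list], rule map_cong[OF refl])
      fix s assume s: "s \<in> set w"
      have "integral {lo (fst s)..hi (fst s)} (\<lambda>t. t * gl (fst s) (lam (fst s)) (mu (fst s)) t) = Lam * dF (fst s)"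
        using Iv_lin[OF sE[OF s]] lm_ok[OF sE[OF s]] by simp
      then show "(if snd s then 1 else - 1) *
          integral {lo (fst s)..hi (fst s)} (\<lambda>t. t * gl (fst s) (lam (fst s)) (mu (fst s)) t) =
          Lam * (Fp (wend src tgt s) - Fp (wstart src tgt s))"
        by (simp add: dF_def wend_def wstart_def)
    qed
    also have "\<dots> = Lam * (\<Sum>s\<leftarrow>w. Fp (wend src tgt s) - Fp (wstart src tgt s))"
      by (simp add: sum_list_const_mult)
    also have "\<dots> = 0" using walk_telescope[OF w] by simp
    finally show "cycle_integral src tgt fv (\<lambda>e t. t * gl e (lam e) (mu e) t) w = 0" .
  qed
qed

end


theorem proposition4p19:
  fixes V :: "'v set" and E :: "'e set" and src tgt :: "'e \<Rightarrow> 'v"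
    and fv :: "'v \<Rightarrow> real" and B :: "'v set"
    and dens c :: "'e \<Rightarrow> real \<Rightarrow> real"
    and r :: "('v, 'e) gpt \<Rightarrow> real" and g :: "('v, 'e) gpt \<Rightarrow> real \<Rightarrow> real"
  assumes "reeb_graph V E src tgt fv B"
    and "log_smooth V E src tgt fv dens"
    and "circulation V E src tgt fv B dens c"
    and "balanced V E src tgt fv c"
    and "\<forall>p\<in>exceptional V E src tgt fv c. local_form_ok E src tgt fv c p (r p) (g p)"
  shows "\<exists>ge. one_form V E src tgt fv ge \<and>
           (\<forall>e\<in>E. \<forall>t. fv (src e) < t \<and> t < fv (tgt e) \<and>
              EPt e t \<notin> exceptional V E src tgt fv c \<longrightarrow> ge e t \<noteq> 0) \<and>
           (\<forall>p\<in>exceptional V E src tgt fv c. coincides_near E src tgt fv ge p (r p) (g p)) \<and>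
           exact_form E src tgt fv (\<lambda>e t. t * ge e t)"
proof -
  interpret RG V E src tgt fv B dens c r g using assms by (simp add: RG_def)
  show ?thesis by (rule main)
qed

end
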